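(* In the setting described in the context, \[ \mathbb{E}\bigg[\mathbf{1}\{\omega(n_{<x})=r\}\max_{y\in\mathcal{Y}}\frac{\tau(n_{<y})}{\operatorname{Log} y}\bigg]\gg 1. \]
   Context: Notation: $\operatorname{Log} x\coloneqq\max\{1,\log x\}$, $\operatorname{Log}_2 x\coloneqq\operatorname{Log}(\operatorname{Log} x)$; $\omega(n)$ = number of distinct prime factors, $\tau(n)$ = number of divisors. Random model: for each prime $p$, $n_p$ equals $1$ with probability $\frac{p}{p+1}$ and $p$ with probability $\frac1{p+1}$, independently over $p$; $n_{<z}\coloneqq\prod_{p<z}n_p$. Setting: $\varepsilon>0$ is fixed, $x$ is sufficiently large in terms of $\varepsilon$, $r$ is an integer with $(1+\varepsilon)\operatorname{Log}_2 x\le r\le(2-\varepsilon)\operatorname{Log}_2 x$, and $\alpha$ is defined by $r=(1+\alpha)\operatorname{Log}_2 x$. Let $\mathcal{Y}\coloneqq\{y>0: |\operatorname{Log}_2 y-\alpha\operatorname{Log}_2 x|\le\sqrt{\operatorname{Log}_2 x},\ \operatorname{Log}_2 y/\log 2\in\mathbb{Z}\}$. Implied constants may depend on $\varepsilon$. *)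

theory Defs
  imports "HOL-Probability.Probability" "HOL-Computational_Algebra.Primes"
begin

definition Log :: "real \<Rightarrow> real" where
  "Log x = max 1 (ln x)"

definition Log2 :: "real \<Rightarrow> real" where
  "Log2 x = Log (Log x)"

definition omega :: "nat \<Rightarrow> nat" where
  "omega n = card (prime_factors n)"

definition tau :: "nat \<Rightarrow> nat" where
  "tau n = card {d. d dvd n}"

definition np_pmf :: "nat \<Rightarrow> nat pmf" where
  "np_pmf p = map_pmf (\<lambda>b. if b then p else 1) (bernoulli_pmf (1 / (real p + 1)))"

definition model :: "(nat \<Rightarrow> nat) measure" where
  "model = (\<Pi>\<^sub>M p\<in>{p. prime p}. measure_pmf (np_pmf p))"

definition n_lt :: "(nat \<Rightarrow> nat) \<Rightarrow> real \<Rightarrow> nat" where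
  "n_lt w z = (\<Prod>p\<in>{p. prime p \<and> real p < z}. w p)"

definition Yset :: "real \<Rightarrow> real \<Rightarrow> real set" where
  "Yset x \<alpha> = {y. y > 0 \<and> \<bar>Log2 y - \<alpha> * Log2 x\<bar> \<le> sqrt (Log2 x)
                 \<and> Log2 y / ln 2 \<in> \<int>}"

end

theory Submission
  imports Defs "HOL-Number_Theory.Number_Theory"
begin


lemma card_multiples:
  assumes "d > (0::nat)"
  shows "card {m\<in>{1..n}. d dvd m} = n div d"
proof -
  have "{m\<in>{1..n}. d dvd m} = (\<lambda>k. d*k) ` {1..n div d}"
  proof (intro equalityI subsetI)
    fix m assume "m \<in> {m\<in>{1..n}. d dvd m}"
    then obtain k where k: "m = d*k" "1 \<le> m" "m \<le> n" by auto
    then have "k \<ge> 1" by (cases k) auto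
    moreover have "k \<le> n div d" using k assms
      by (metis div_le_mono nonzero_mult_div_cancel_left not_gr0)
    ultimately show "m \<in> (\<lambda>k. d*k) ` {1..n div d}" using k by auto
  next
    fix m assume "m \<in> (\<lambda>k. d*k) ` {1..n div d}"
    then obtain k where k0: "k \<in> {1..n div d}" "m = d*k" by (rule imageE)
    then have k: "m = d*k" "1 \<le> k" "k \<le> n div d" by auto
    have "d * k \<le> d * (n div d)" using k by simp
    also have "\<dots> \<le> n" by simp
    finally show "m \<in> {m\<in>{1..n}. d dvd m}" using k assms by auto
  qed
  moreover have "inj_on (\<lambda>k. d*k) {1..n div d}" using assms by (auto simp: inj_on_def)
  ultimately show ?thesis by (simp add: card_image)
qed

lemma ln_fact_mangoldt:
  "ln (fact n :: real) = (\<Sum>d=1..n. mangoldt d * real (n div d))"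
proof -
  have "ln (fact n :: real) = (\<Sum>m=1..n. ln (real m))"
    by (simp add: fact_prod, subst ln_prod) auto
  also have "\<dots> = (\<Sum>m=1..n. \<Sum>d | d dvd m. mangoldt d)"
    by (intro sum.cong refl) (simp add: mangoldt_sum)
  also have "\<dots> = (\<Sum>m=1..n. \<Sum>d=1..n. if d dvd m then mangoldt d else 0)"
  proof (rule sum.cong[OF refl])
    fix m assume m: "m \<in> {1..n}"
    have "(\<Sum>d | d dvd m. mangoldt d :: real) = (\<Sum>d\<in>{1..n} \<inter> {d. d dvd m}. mangoldt d)"
    proof (intro sum.cong refl)
      show "{d. d dvd m} = {1..n} \<inter> {d. d dvd m}"
      proof (intro equalityI subsetI)
        fix x assume "x \<in> {d. d dvd m}"
        then have "x dvd m" by simp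
        moreover have "m > 0" using m by auto
        ultimately have "x \<le> m" "x > 0" using dvd_imp_le dvd_pos_nat by blast+
        then show "x \<in> {1..n} \<inter> {d. d dvd m}" using m \<open>x dvd m\<close> by auto
      qed auto
    qed
    also have "\<dots> = (\<Sum>d=1..n. if d dvd m then mangoldt d else 0)"
      by (simp add: sum.inter_restrict)
    finally show "(\<Sum>d | d dvd m. mangoldt d :: real) = (\<Sum>d=1..n. if d dvd m then mangoldt d else 0)" .
  qed
  also have "\<dots> = (\<Sum>d=1..n. \<Sum>m=1..n. if d dvd m then mangoldt d else 0)"
    by (rule sum.swap)
  also have "\<dots> = (\<Sum>d=1..n. mangoldt d * real (n div d))"
  proof (intro sum.cong refl)
    fix d assume d: "d \<in> {1..n}"
    have "(\<Sum>m=1..n. if d dvd m then mangoldt d else 0 :: real) = (\<Sum>m\<in>{m\<in>{1..n}. d dvd m}. mangoldt d)"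
      by (rule sum.inter_filter[symmetric]) simp
    also have "\<dots> = mangoldt d * real (n div d)"
      using d card_multiples[of d n] by simp
    finally show "(\<Sum>m=1..n. if d dvd m then mangoldt d else 0 :: real) = mangoldt d * real (n div d)" .
  qed
  finally show ?thesis .
qed

lemma ln_lower_2u:
  fixes u :: real
  assumes "u \<ge> 0"
  shows "2*u/(2+u) \<le> ln (1+u)"
proof -
  let ?f = "\<lambda>t::real. ln (1+t) - 2*t/(2+t)"
  have "?f 0 \<le> ?f u"
  proof (rule DERIV_nonneg_imp_nondecreasing[OF assms])
    fix t :: real assume t: "0 \<le> t" "t \<le> u"
    have "(?f has_real_derivative (1/(1+t) - (2*(2+t) - 2*t)/(2+t)^2)) (at t)"
      using t by (auto intro!: derivative_eq_intros simp: power2_eq_square)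
    moreover have "1/(1+t) - (2*(2+t) - 2*t)/(2+t)^2 \<ge> 0"
    proof -
      have "(2+t)^2 \<ge> 4*(1+t)" by (simp add: power2_eq_square algebra_simps)
      then have "4/(2+t)^2 \<le> 1/(1+t)" using t
        by (simp add: divide_simps)
      then show ?thesis by (simp add: algebra_simps)
    qed
    ultimately show "\<exists>y. (?f has_real_derivative y) (at t) \<and> y \<ge> 0" by blast
  qed
  then show ?thesis by simp
qed

lemma ln_step_lower:
  assumes "n \<ge> (1::nat)"
  shows "1 \<le> (real n + 1/2) * (ln (real n + 1) - ln (real n))"
proof -
  have n: "real n > 0" using assms by simp
  have "1 + 1/real n = (real n + 1)/real n" using n by (simp add: field_simps)
  then have "ln (real n + 1) - ln (real n) = ln (1 + 1/real n)"
    using n by (simp add: ln_div)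
  moreover have "2*(1/real n)/(2+1/real n) \<le> ln (1 + 1/real n)"
    by (rule ln_lower_2u) simp
  moreover have "2*(1/real n)/(2+1/real n) = 1 / (real n + 1/2)"
    using n by (simp add: field_simps)
  ultimately have "1 / (real n + 1/2) \<le> ln (real n + 1) - ln (real n)" by simp
  then show ?thesis using n by (simp add: field_simps)
qed

lemma ln_step_upper:
  assumes "n \<ge> (1::nat)"
  shows "real n * (ln (real n + 1) - ln (real n)) \<le> 1"
proof -
  have n: "real n > 0" using assms by simp
  have "ln (real n + 1) - ln (real n) = ln ((real n + 1) / real n)"
    using n by (subst ln_div) auto
  also have "\<dots> \<le> (real n + 1) / real n - 1" by (rule ln_le_minus_one) (use n in simp)
  also have "\<dots> = 1 / real n" using n by (simp add: field_simps)
  finally show ?thesis using n by (simp add: field_simps)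
qed

lemma ln_fact_lower:
  assumes "n \<ge> (1::nat)"
  shows "real n * ln (real n) - real n \<le> ln (fact n :: real)"
  using assms
proof (induction n rule: dec_induct)
  case base then show ?case by simp
next
  case (step n)
  have "ln (fact (Suc n) :: real) = ln (real n + 1) + ln (fact n)"
    by (simp add: ln_mult add.commute)
  moreover have "real n * (ln (real n + 1) - ln (real n)) \<le> 1"
    using ln_step_upper step by simp
  ultimately show ?case using step by (simp add: algebra_simps)
qed

lemma ln_fact_upper:
  assumes "n \<ge> (1::nat)"
  shows "ln (fact n :: real) + real n \<le> 1 + ln (real n) / 2 + real n * ln (real n)"
  using assms
proof (induction n rule: dec_induct)
  case base then show ?case by simp
next
  case (step n)
  have "ln (fact (Suc n) :: real) = ln (real n + 1) + ln (fact n)"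
    by (simp add: ln_mult add.commute)
  moreover have "1 \<le> (real n + 1/2) * (ln (real n + 1) - ln (real n))"
    using ln_step_lower step by simp
  ultimately show ?case using step by (simp add: algebra_simps)
qed

lemma ln_fact_le: "ln (fact n :: real) \<le> real n * ln (real n)"
proof (cases "n = 0")
  case False
  have "ln (fact n :: real) \<le> ln (real (n^n))"
    using fact_le_power[of n, where 'a=real] False by (subst ln_le_cancel_iff) auto
  also have "\<dots> = real n * ln (real n)" using False by (simp add: ln_realpow)
  finally show ?thesis .
qed simp

definition psi :: "nat \<Rightarrow> real" where
  "psi n = (\<Sum>d=1..n. mangoldt d)"

lemma psi_nonneg: "psi n \<ge> 0"
  unfolding psi_def by (intro sum_nonneg mangoldt_nonneg)

lemma psi_mono: "m \<le> n \<Longrightarrow> psi m \<le> psi n"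
  unfolding psi_def by (intro sum_mono2) (auto intro: mangoldt_nonneg)

lemma psi_double: "psi (2*n) - psi n \<le> 2 * real n * ln 2"
proof -
  have "psi (2*n) - psi n = (\<Sum>d\<in>{n<..2*n}. mangoldt d)"
  proof -
    have "{1..2*n} = {1..n} \<union> {n<..2*n}" by auto
    then have "psi (2*n) = psi n + (\<Sum>d\<in>{n<..2*n}. mangoldt d)"
      unfolding psi_def by (subst sum.union_disjoint[symmetric]) auto
    then show ?thesis by simp
  qed
  also have "\<dots> = (\<Sum>d\<in>{n<..2*n}. mangoldt d * (real (2*n div d) - 2 * real (n div d)))"
  proof (intro sum.cong refl)
    fix d assume d: "d \<in> {n<..2*n}"
    then have "2*n div d = 1" by (auto intro: div_nat_eqI)
    moreover have "n div d = 0" using d by auto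
    ultimately show "mangoldt d = mangoldt d * (real (2*n div d) - 2 * real (n div d))" by simp
  qed
  also have "\<dots> \<le> (\<Sum>d=1..2*n. mangoldt d * (real (2*n div d) - 2 * real (n div d)))"
  proof (intro sum_mono2)
    fix d assume "d \<in> {1..2*n} - {n<..2*n}"
    have "2 * (n div d) \<le> 2*n div d"
    proof (cases "d = 0")
      case False
      then show ?thesis
        using div_times_less_eq_dividend[of n d]
        by (subst less_eq_div_iff_mult_less_eq) auto
    qed simp
    then show "0 \<le> mangoldt d * (real (2*n div d) - 2 * real (n div d))"
      by (intro mult_nonneg_nonneg mangoldt_nonneg) linarith
  qed auto
  also have "\<dots> = ln (fact (2*n)) - 2 * ln (fact n)"
  proof -
    have "(\<Sum>d=1..2*n. mangoldt d * real (n div d)) = (\<Sum>d=1..n. mangoldt d * real (n div d))"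
      by (rule sum.mono_neutral_right) auto
    moreover have "(\<Sum>d=1..2*n. mangoldt d * (real (2*n div d) - 2 * real (n div d)))
        = (\<Sum>d=1..2*n. mangoldt d * real (2*n div d)) - 2 * (\<Sum>d=1..2*n. mangoldt d * real (n div d))"
      by (simp add: sum_subtractf right_diff_distrib sum_distrib_left algebra_simps)
    ultimately show ?thesis
      by (simp only: ln_fact_mangoldt)
  qed
  also have "\<dots> = ln (real ((2*n) choose n))"
  proof -
    have "fact n * fact n * ((2*n) choose n) = (fact (2*n) :: nat)"
      using binomial_fact_lemma[of n "2*n"] by simp
    then have "(fact (2*n) :: real) = fact n * fact n * real ((2*n) choose n)"
      by (metis (mono_tags, lifting) of_nat_fact of_nat_mult)
    moreover have "real ((2*n) choose n) > 0" by simp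
    ultimately show ?thesis by (simp add: ln_mult)
  qed
  also have "\<dots> \<le> ln (2 ^ (2*n))"
    using binomial_le_pow2[of "2*n" n] by (subst ln_le_cancel_iff) (auto simp del: of_nat_power simp: of_nat_le_iff[symmetric])
  also have "\<dots> = 2 * real n * ln 2" by (simp add: ln_realpow)
  finally show ?thesis .
qed

lemma psi_le: "psi n \<le> 4 * real n"
proof (induction n rule: less_induct)
  case (less n)
  show ?case
  proof (cases "n \<le> 1")
    case True
    then have "n = 0 \<or> n = 1" by auto
    then show ?thesis by (auto simp: psi_def)
  next
    case False
    have l2: "ln (2::real) \<le> 1" using ln_2_less_1 by simp
    show ?thesis
    proof (cases "even n")
      case True
      then obtain m where m: "n = 2*m" by auto
      with False have "m < n" by auto
      then have "psi m \<le> 4 * real m" by (rule less)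
      moreover have "psi (2*m) - psi m \<le> 2 * real m * ln 2" by (rule psi_double)
      moreover have "2 * real m * ln 2 \<le> 2 * real m" using mult_left_mono[OF l2, of "2 * real m"] by simp
      ultimately show ?thesis using m by simp
    next
      case odd: False
      then obtain m where m: "n = 2*m+1" by (metis oddE)
      with False have "m \<ge> 1" by auto
      have "m + 1 < n" using m \<open>m \<ge> 1\<close> by auto
      then have "psi (m+1) \<le> 4 * real (m+1)" by (rule less)
      moreover have "psi (2*(m+1)) - psi (m+1) \<le> 2 * real (m+1) * ln 2" by (rule psi_double)
      moreover have "(2 + 2 * real m) * ln 2 \<le> 2 + 2 * real m" using mult_left_mono[OF l2, of "2 + 2 * real m"] by simp
      moreover have "psi n \<le> psi (2*(m+1))" using m by (intro psi_mono) auto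
      ultimately show ?thesis using m \<open>m \<ge> 1\<close> by (simp add: algebra_simps)
    qed
  qed
qed


definition RM :: "nat \<Rightarrow> real" where
  "RM n = (\<Sum>d=1..n. mangoldt d / real d)"

lemma RM_bounds:
  assumes "n \<ge> 1"
  shows "ln (real n) - 1 \<le> RM n" "RM n \<le> ln (real n) + 4"
proof -
  have n: "real n > 0" using assms by simp
  have div_le: "real (n div d) \<le> real n / real d" for d
  proof (cases "d = 0")
    case False
    have "n div d * d \<le> n" by (rule div_times_less_eq_dividend)
    then have "real (n div d) * real d \<le> real n" by (metis of_nat_le_iff of_nat_mult)
    then show ?thesis using False by (simp add: field_simps)
  qed simp
  have div_ge: "real n / real d - 1 \<le> real (n div d)" if "d \<ge> 1" for d
  proof -
    have d: "real d > 0" using that by simp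
    have "n = d * (n div d) + n mod d" by simp
    then have "real n = real d * real (n div d) + real (n mod d)"
      by (metis of_nat_add of_nat_mult)
    moreover have "real (n mod d) < real d" using that by simp
    ultimately have "real n < real d * (real (n div d) + 1)" by (simp add: algebra_simps)
    then show ?thesis using d by (simp add: field_simps)
  qed
  have "ln (fact n :: real) \<le> (\<Sum>d=1..n. mangoldt d * (real n / real d))"
    unfolding ln_fact_mangoldt
    by (intro sum_mono mult_left_mono div_le mangoldt_nonneg)
  also have "\<dots> = real n * RM n"
    unfolding RM_def by (simp add: sum_distrib_left algebra_simps)
  finally have "real n * ln (real n) - real n \<le> real n * RM n"
    using ln_fact_lower[OF assms] by simp
  then have "real n * (ln (real n) - 1) \<le> real n * RM n" by (simp add: algebra_simps)
  then show "ln (real n) - 1 \<le> RM n" using n by (simp only: mult_le_cancel_left_pos)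
  have "(\<Sum>d=1..n. mangoldt d * (real n / real d - 1)) \<le> ln (fact n :: real)"
    unfolding ln_fact_mangoldt
    by (intro sum_mono mult_left_mono div_ge mangoldt_nonneg) auto
  moreover have "(\<Sum>d=1..n. mangoldt d * (real n / real d - 1)) = real n * RM n - psi n"
    unfolding RM_def psi_def by (simp add: sum_distrib_left algebra_simps sum_subtractf)
  ultimately have "real n * RM n \<le> real n * ln (real n) + 4 * real n"
    using ln_fact_le[of n] psi_le[of n] by simp
  then have "real n * RM n \<le> real n * (ln (real n) + 4)" by (simp add: algebra_simps)
  then show "RM n \<le> ln (real n) + 4" using n by (simp only: mult_le_cancel_left_pos)
qed

definition SM :: "nat \<Rightarrow> real" where
  "SM n = (\<Sum>d=2..n. mangoldt d / (real d * ln (real d)))"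

lemma RM_Suc: "RM (Suc n) = RM n + mangoldt (Suc n) / real (Suc n)"
  unfolding RM_def by simp

lemma SM_Suc: "n \<ge> 1 \<Longrightarrow> SM (Suc n) = SM n + mangoldt (Suc n) / (real (Suc n) * ln (real (Suc n)))"
  unfolding SM_def by (simp add: sum.atLeast_Suc_atMost_Suc_shift del: of_nat_Suc)

definition GM :: "nat \<Rightarrow> real" where
  "GM n = SM n - RM n / ln (real n)"

lemma GM_step:
  assumes "n \<ge> 2"
  shows "GM (Suc n) = GM n + RM n * (1 / ln (real n) - 1 / ln (real (Suc n)))"
proof -
  define m where "m = mangoldt (Suc n) / real (Suc n)"
  define a where "a = ln (real n)"
  define b where "b = ln (real (Suc n))"
  have "mangoldt (Suc n) / (real (Suc n) * ln (real (Suc n))) = m / b"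
    unfolding m_def b_def by simp
  then have "GM (Suc n) = SM n + m / b - (RM n + m) / b"
    unfolding GM_def using assms by (simp add: SM_Suc RM_Suc m_def b_def)
  also have "\<dots> = SM n - RM n / b" by (simp add: add_divide_distrib)
  also have "\<dots> = GM n + RM n * (1 / a - 1 / b)"
    unfolding GM_def a_def by (simp add: right_diff_distrib)
  finally show ?thesis unfolding a_def b_def .
qed

lemma GM_2: "GM 2 = 0"
proof -
  have "mangoldt 2 = (ln 2 :: real)" by simp
  moreover have "SM 2 = mangoldt 2 / (2 * ln 2)" unfolding SM_def by simp
  moreover have "RM 2 = mangoldt 2 / 2" unfolding RM_def by (simp add: numeral_2_eq_2)
  ultimately have h1: "SM 2 = 1/2" and h2: "RM 2 = ln 2 / 2" by simp_all
  show ?thesis unfolding GM_def by (simp only: h1 h2) simp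
qed

lemma lnln_step:
  assumes "n \<ge> (2::nat)"
  defines "a \<equiv> ln (real n)" and "b \<equiv> ln (real n + 1)"
  shows "(b - a) / b \<le> ln b - ln a" "ln b - ln a \<le> (b - a) / b + (1/a - 1/b)"
    "0 \<le> 1/a - 1/b" "a > 0" "b > a"
proof -
  show a: "a > 0" unfolding a_def using assms by simp
  show ba: "b > a" unfolding a_def b_def using assms by simp
  have b: "b > 0" using a ba by simp
  have "ln (a / b) \<le> a / b - 1" by (rule ln_le_minus_one) (use a b in simp)
  then have "ln a - ln b \<le> a / b - 1" using a b by (simp add: ln_div)
  then show "(b - a) / b \<le> ln b - ln a" using b by (simp add: field_simps)
  have "ln (b / a) \<le> b / a - 1" by (rule ln_le_minus_one) (use a b in simp)
  then have 1: "ln b - ln a \<le> b / a - 1" using a b by (simp add: ln_div)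
  have "real n * (b - a) \<le> 1"
    using ln_step_upper[of n] assms unfolding a_def b_def by simp
  moreover have "b - a \<le> real n * (b - a)"
    using ba assms by (intro mult_le_cancel_right1[THEN iffD2]) auto
  ultimately have "b - a \<le> 1" by linarith
  moreover have "0 \<le> 1/a - 1/b" using a ba by (simp add: frac_le)
  ultimately have "(b - a) * (1/a - 1/b) \<le> 1/a - 1/b"
    using ba by (simp add: mult_left_le_one_le)
  moreover have "b / a - 1 = (b - a) / b + (b - a) * (1/a - 1/b)"
    using a b by (simp add: field_simps)
  ultimately show "ln b - ln a \<le> (b - a) / b + (1/a - 1/b)" using 1 by simp
  show "0 \<le> 1/a - 1/b" using a ba by (simp add: frac_le)
qed

lemma GM_upper:
  assumes "n \<ge> 2"
  shows "GM n \<le> ln (ln (real n)) - ln (ln 2) + 4 / ln 2 - 4 / ln (real n)"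
  using assms
proof (induction n rule: dec_induct)
  case base then show ?case using GM_2 by simp
next
  case (step n)
  define a where "a = ln (real n)"
  define b where "b = ln (real n + 1)"
  note L = lnln_step[OF step(1), folded a_def b_def]
  have R: "RM n \<le> a + 4" using RM_bounds(2)[of n] step(1) unfolding a_def by simp
  have "GM (Suc n) = GM n + RM n * (1/a - 1/b)"
    using GM_step[OF step(1)] unfolding a_def b_def by (simp add: add.commute)
  also have "\<dots> \<le> GM n + (a + 4) * (1/a - 1/b)"
    using R L(3) by (simp add: mult_right_mono)
  also have "(a + 4) * (1/a - 1/b) = (b - a) / b + 4 * (1/a - 1/b)"
    using L(4,5) by (simp add: field_simps)
  finally show ?case using step(3) L(1) unfolding a_def b_def by (simp add: add.commute)
qed

lemma GM_lower:
  assumes "n \<ge> 2"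
  shows "ln (ln (real n)) - ln (ln 2) - 2 / ln 2 + 2 / ln (real n) \<le> GM n"
  using assms
proof (induction n rule: dec_induct)
  case base then show ?case using GM_2 by simp
next
  case (step n)
  define a where "a = ln (real n)"
  define b where "b = ln (real n + 1)"
  note L = lnln_step[OF step(1), folded a_def b_def]
  have R: "a - 1 \<le> RM n" using RM_bounds(1)[of n] step(1) unfolding a_def by simp
  have "GM (Suc n) = GM n + RM n * (1/a - 1/b)"
    using GM_step[OF step(1)] unfolding a_def b_def by (simp add: add.commute)
  moreover have "(a - 1) * (1/a - 1/b) \<le> RM n * (1/a - 1/b)"
    using R L(3) by (simp add: mult_right_mono)
  moreover have "(a - 1) * (1/a - 1/b) = (b - a) / b - (1/a - 1/b)"
    using L(4,5) by (simp add: field_simps)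
  ultimately show ?case using step(3) L(2) unfolding a_def b_def by (simp add: add.commute)
qed

definition CM :: real where
  "CM = 1 - ln (ln 2) + 4 / ln 2"

lemma SM_bounds:
  assumes "n \<ge> 2"
  shows "\<bar>SM n - ln (ln (real n))\<bar> \<le> CM"
proof -
  have l: "ln (real n) > 0" using assms by simp
  have l2: "ln (2::real) > 0" by simp
  have lnl: "ln (real n) \<ge> ln 2" using assms by simp
  have "SM n = GM n + RM n / ln (real n)" unfolding GM_def by simp
  moreover have "RM n / ln (real n) \<le> 1 + 4 / ln (real n)"
    using RM_bounds(2)[of n] assms l by (simp add: field_simps)
  moreover have "1 - 1 / ln (real n) \<le> RM n / ln (real n)"
  proof -
    have "(ln (real n) - 1) / ln (real n) \<le> RM n / ln (real n)"
      using RM_bounds(1)[of n] assms l by (intro divide_right_mono) auto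
    moreover have "(ln (real n) - 1) / ln (real n) = 1 - 1 / ln (real n)"
      using l by (simp add: field_simps)
    ultimately show ?thesis by simp
  qed
  moreover note GM_upper[OF assms] GM_lower[OF assms]
  moreover have "1 / ln (real n) \<le> 1 / ln 2" using lnl l2 by (simp add: frac_le)
  moreover have "0 \<le> 1 / ln (real n)" using l by simp
  moreover have "ln (ln (2::real)) \<le> 0" using ln_2_less_1 by simp
  moreover have "0 \<le> 1 / ln (2::real)" by simp
  moreover have "4 / ln (real n) = 4 * (1 / ln (real n))" "2 / ln (real n) = 2 * (1 / ln (real n))"
     "4 / ln (2::real) = 4 * (1 / ln 2)" "2 / ln (2::real) = 2 * (1 / ln 2)" by simp_all
  ultimately show ?thesis unfolding CM_def abs_le_iff by linarith
qed

definition PS :: "nat \<Rightarrow> real" where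
  "PS n = (\<Sum>p | prime p \<and> p \<le> n. 1 / real p)"

lemma PS_le_SM: "PS n \<le> SM n"
proof -
  have "PS n = (\<Sum>d\<in>{d\<in>{2..n}. prime d}. mangoldt d / (real d * ln (real d)))"
    unfolding PS_def
  proof (intro sum.cong)
    show "{p. prime p \<and> p \<le> n} = {d\<in>{2..n}. prime d}" by (auto dest: prime_ge_2_nat)
  next
    fix p assume "p \<in> {d\<in>{2..n}. prime d}"
    then have p: "prime p" "p \<ge> 2" by auto
    then have "ln (real p) > 0" by simp
    then show "1 / real p = mangoldt p / (real p * ln (real p))" using p by simp
  qed
  also have "\<dots> \<le> SM n"
    unfolding SM_def
    by (intro sum_mono2) (auto intro!: divide_nonneg_nonneg mangoldt_nonneg)
  finally show ?thesis .
qed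

lemma PS_eq: "PS n = (\<Sum>d\<in>{d\<in>{2..n}. prime d}. mangoldt d / (real d * ln (real d)))"
  unfolding PS_def
proof (intro sum.cong)
  show "{p. prime p \<and> p \<le> n} = {d\<in>{2..n}. prime d}" by (auto dest: prime_ge_2_nat)
next
  fix p assume "p \<in> {d\<in>{2..n}. prime d}"
  then have p: "prime p" "p \<ge> 2" by auto
  then have "ln (real p) > 0" by simp
  then show "1 / real p = mangoldt p / (real p * ln (real p))" using p by simp
qed

lemma geom_tail:
  fixes x :: real
  assumes "0 \<le> x" "x < 1"
  shows "(\<Sum>k=2..m. x^k) \<le> x^2 / (1 - x)"
proof (cases "m < 2")
  case True then show ?thesis using assms by simp
next
  case False
  then have "(\<Sum>k=2..m. x^k) = (x^2 - x^Suc m) / (1 - x)"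
    using assms by (subst sum_gp) auto
  also have "\<dots> \<le> x^2 / (1 - x)"
    using assms by (intro divide_right_mono) auto
  finally show ?thesis .
qed

lemma telescope_pp: "n \<ge> 1 \<Longrightarrow> (\<Sum>p=2..n. 1 / (real p * (real p - 1))) \<le> 1 - 1 / real n"
proof (induction n rule: dec_induct)
  case base then show ?case by simp
next
  case (step n)
  have "(\<Sum>p=2..Suc n. 1 / (real p * (real p - 1))) = (\<Sum>p=2..n. 1 / (real p * (real p - 1))) + 1 / ((real n + 1) * real n)"
    using step(1) by (simp add: sum.cl_ivl_Suc)
  also have "\<dots> \<le> 1 - 1 / real n + 1 / ((real n + 1) * real n)" using step(3) by simp
  also have "\<dots> = 1 - 1 / real (Suc n)"
  proof -
    have n0: "real n > 0" using step(1) by simp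
    have "1 / real n - 1 / ((real n + 1) * real n) = 1 / (1 + real n)"
      using n0 by (simp add: divide_simps)
    then show ?thesis by (simp only: of_nat_Suc)
  qed
  finally show ?case .
qed

lemma SM_le_PS: "SM n \<le> PS n + 1"
proof -
  let ?f = "\<lambda>d. mangoldt d / (real d * ln (real d))"
  define D where "D = {d\<in>{2..n}. primepow d \<and> \<not> prime d}"
  define Q where "Q = {(p,k). p \<in> {2..n} \<and> k \<in> {2..n} \<and> prime p \<and> p^k \<le> n}"
  define h where "h = (\<lambda>(p::nat,k::nat). p^k)"
  have inj: "inj_on h Q" unfolding inj_on_def Q_def h_def
      by (auto simp: prime_power_inj'')
  have "SM n = (\<Sum>d\<in>{2..n} \<inter> {d. prime d}. ?f d) + (\<Sum>d\<in>{2..n} - {d. prime d}. ?f d)"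
    unfolding SM_def by (rule sum.Int_Diff) simp
  also have "{2..n} \<inter> {d. prime d} = {d\<in>{2..n}. prime d}" by auto
  also have "{2..n} - {d. prime d} = {d\<in>{2..n}. \<not> prime d}" by auto
  also have "(\<Sum>d\<in>{d\<in>{2..n}. \<not> prime d}. ?f d) = (\<Sum>d\<in>D. ?f d)"
    unfolding D_def by (rule sum.mono_neutral_right) (auto simp: mangoldt_def)
  also have "D = h ` Q"
  proof (intro equalityI subsetI)
    fix d assume "d \<in> D"
    then have d: "d \<in> {2..n}" "primepow d" "\<not> prime d" unfolding D_def by auto
    then obtain p k where pk: "prime p" "k > 0" "d = p^k" unfolding primepow_def by auto
    have "k \<noteq> 1" using pk d by auto
    then have k2: "k \<ge> 2" using pk by auto
    have p2: "p \<ge> 2" using pk prime_ge_2_nat by auto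
    have "p \<le> p^k" using pk p2 by (simp add: self_le_power)
    moreover have "k < 2^k" by (rule less_exp)
    moreover have "2^k \<le> p^k" using p2 by (simp add: power_mono)
    ultimately have "k < p^k" by linarith
    then have "p \<le> n" "k \<le> n" using d pk \<open>p \<le> p^k\<close> by auto
    then show "d \<in> h ` Q" unfolding Q_def h_def using pk p2 k2 d
      by (auto intro!: image_eqI[of _ _ "(p,k)"])
  next
    fix d assume "d \<in> h ` Q"
    then obtain p k where pk: "prime p" "k \<ge> 2" "p^k \<le> n" "d = p^k" "p \<ge> 2"
      unfolding Q_def h_def by auto
    have "p \<le> p^k" using pk by (simp add: self_le_power)
    then have "p^k \<ge> 2" using pk by linarith
    moreover have "\<not> prime (p^k)" using pk by (simp add: prime_power_iff)
    moreover have "primepow (p^k)" using pk unfolding primepow_def by auto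
    ultimately show "d \<in> D" unfolding D_def using pk by auto
  qed
  also have "(\<Sum>d\<in>h ` Q. ?f d) = (\<Sum>q\<in>Q. ?f (h q))"
    using sum.reindex[OF inj, of ?f] by (simp add: o_def)
  also have "\<dots> \<le> (\<Sum>q\<in>Q. (1 / real (fst q)) ^ snd q)"
  proof (intro sum_mono)
    fix q assume "q \<in> Q"
    then obtain p k where q: "q = (p,k)" "prime p" "k \<ge> 2" "p \<ge> 2" unfolding Q_def by auto
    have lp: "ln (real p) > 0" using q by simp
    have "?f (h q) = ln (real p) / (real p ^ k * (real k * ln (real p)))"
      using q by (simp add: h_def ln_realpow)
    also have "\<dots> = 1 / (real k * real p ^ k)" using lp by (simp add: field_simps)
    also have "\<dots> \<le> 1 / real p ^ k" using q by (intro divide_left_mono) auto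
    finally show "?f (h q) \<le> (1 / real (fst q)) ^ snd q" using q by (simp add: power_divide)
  qed
  also have "\<dots> \<le> (\<Sum>q\<in>{2..n} \<times> {2..n}. (1 / real (fst q)) ^ snd q)"
    by (intro sum_mono2) (auto simp: Q_def)
  also have "\<dots> = (\<Sum>p=2..n. \<Sum>k=2..n. (1 / real p) ^ k)"
    by (simp add: sum.cartesian_product case_prod_unfold)
  also have "\<dots> \<le> (\<Sum>p=2..n. 1 / (real p * (real p - 1)))"
  proof (intro sum_mono)
    fix p assume p: "p \<in> {2..n}"
    then have "(\<Sum>k=2..n. (1 / real p) ^ k) \<le> (1 / real p)^2 / (1 - 1 / real p)"
      by (intro geom_tail) auto
    also have "\<dots> = 1 / (real p * (real p - 1))" using p by (simp add: field_simps power2_eq_square)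
    finally show "(\<Sum>k=2..n. (1 / real p) ^ k) \<le> 1 / (real p * (real p - 1))" .
  qed
  also have "\<dots> \<le> 1"
  proof (cases "n \<ge> 1")
    case True
    then have "(\<Sum>p=2..n. 1 / (real p * (real p - 1))) \<le> 1 - 1 / real n" by (rule telescope_pp)
    also have "\<dots> \<le> 1" by simp
    finally show ?thesis .
  qed auto
  finally show ?thesis using PS_eq[of n] by simp
qed

lemma PS_mertens:
  assumes "n \<ge> 2"
  shows "\<bar>PS n - ln (ln (real n))\<bar> \<le> CM + 1"
  using SM_bounds[OF assms] PS_le_SM[of n] SM_le_PS[of n] by (simp add: abs_le_iff)

definition primesum :: "real \<Rightarrow> real" where
  "primesum z = (\<Sum>p | prime p \<and> real p < z. 1 / real p)"

lemma primesum_mertens: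
  assumes "z \<ge> 3"
  shows "\<bar>primesum z - ln (ln z)\<bar> \<le> CM + 2"
proof -
  define N where "N = nat (\<lceil>z\<rceil> - 1)"
  have c3: "\<lceil>z\<rceil> \<ge> 3" using assms by (metis ceiling_mono ceiling_numeral)
  have N: "real N = real_of_int \<lceil>z\<rceil> - 1" unfolding N_def using c3 by simp
  have N2: "N \<ge> 2" unfolding N_def using c3 by arith
  have zN: "real N < z" "z \<le> real N + 1" using N by (simp_all add: ceiling_less_cancel le_of_int_ceiling)
  have set: "{p. prime p \<and> real p < z} = {p. prime p \<and> p \<le> N}"
  proof -
    have "real p < z \<longleftrightarrow> p \<le> N" for p
    proof
      assume "real p < z"
      then have "int p < \<lceil>z\<rceil>" by (simp add: less_ceiling_iff)
      then show "p \<le> N" unfolding N_def by simp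
    next
      assume "p \<le> N"
      then have "real p \<le> real N" by simp
      then show "real p < z" using zN by simp
    qed
    then show ?thesis by auto
  qed
  have PSz: "primesum z = PS N" unfolding primesum_def PS_def set by simp
  have lN: "ln (real N) > 0" using N2 by simp
  have "ln (ln (real N)) \<le> ln (ln z)"
    using zN N2 lN by (subst ln_le_cancel_iff) auto
  moreover have "ln (ln z) \<le> ln (ln (real N)) + 1"
  proof -
    have "2 * N \<le> N * N" using N2 by (rule mult_le_mono1)
    then have "N + 1 \<le> N * N" using N2 by linarith
    then have "real N + 1 \<le> real N * real N" by (metis of_nat_1 of_nat_add of_nat_le_iff of_nat_mult)
    then have "z \<le> real N * real N" using zN by linarith
    then have "ln z \<le> ln (real N * real N)" using assms by (subst ln_le_cancel_iff) auto
    also have "\<dots> = 2 * ln (real N)" using N2 by (simp add: ln_mult)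
    finally have "ln (ln z) \<le> ln (2 * ln (real N))" using assms lN by (subst ln_le_cancel_iff) auto
    also have "\<dots> = ln 2 + ln (ln (real N))" using lN by (simp add: ln_mult)
    finally show ?thesis using ln_2_less_1 by simp
  qed
  ultimately show ?thesis using PS_mertens[OF N2] PSz by (simp add: abs_le_iff)
qed


lemma tau_prod_primes:
  assumes "finite B" "\<And>p. p \<in> B \<Longrightarrow> prime p"
  shows "tau (\<Prod>p\<in>B. p) = 2 ^ card B"
  using assms
proof (induction B rule: finite_induct)
  case empty
  have "{d. d dvd (1::nat)} = {1}" by auto
  then show ?case unfolding tau_def by simp
next
  case (insert a B)
  define n where "n = (\<Prod>p\<in>B. p)"
  have pa: "prime a" using insert by auto
  have n0: "n > 0" unfolding n_def using insert by (auto intro!: prod_pos prime_gt_0_nat)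
  have nd: "\<not> a dvd n"
  proof
    assume "a dvd n"
    then obtain q where "q \<in> B" "a dvd q" unfolding n_def
      using prime_dvd_prod_iff[OF insert(1) pa, of "\<lambda>p. p"] by auto
    moreover have "prime q" using insert.prems \<open>q \<in> B\<close> by auto
    ultimately have "a = q" using primes_dvd_imp_eq[OF pa] by blast
    then show False using insert \<open>q \<in> B\<close> by auto
  qed
  have eq: "{d. d dvd a * n} = {d. d dvd n} \<union> (\<lambda>d. a * d) ` {d. d dvd n}"
  proof (intro equalityI subsetI)
    fix d assume "d \<in> {d. d dvd a * n}"
    then have d: "d dvd a * n" by simp
    show "d \<in> {d. d dvd n} \<union> (\<lambda>d. a * d) ` {d. d dvd n}"
    proof (cases "a dvd d")
      case True
      then obtain e where e: "d = a * e" by auto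
      then have "e dvd n" using d pa using nat_mult_dvd_cancel1[OF prime_gt_0_nat[OF pa]] by simp
      then show ?thesis using e by auto
    next
      case False
      then have "coprime a d" using pa by (simp add: prime_imp_coprime)
      then have "coprime d a" by (simp add: coprime_commute)
      then have "d dvd n" using d coprime_dvd_mult_right_iff[of d a n] by simp
      then show ?thesis by auto
    qed
  qed auto
  have disj: "{d. d dvd n} \<inter> (\<lambda>d. a * d) ` {d. d dvd n} = {}"
  proof (rule ccontr)
    assume "{d. d dvd n} \<inter> (\<lambda>d. a * d) ` {d. d dvd n} \<noteq> {}"
    then obtain e where "a * e dvd n" by auto
    then have "a dvd n" by (metis dvd_mult_left)
    then show False using nd by simp
  qed
  have fin: "finite {d. d dvd n}" using n0 by simp
  have inj: "inj_on (\<lambda>d. a * d) {d. d dvd n}" using pa by (auto simp: inj_on_def prime_gt_0_nat)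
  have "tau (\<Prod>p\<in>insert a B. p) = card ({d. d dvd n} \<union> (\<lambda>d. a * d) ` {d. d dvd n})"
    unfolding tau_def using insert eq n_def by simp
  also have "\<dots> = card {d. d dvd n} + card ((\<lambda>d. a * d) ` {d. d dvd n})"
    using fin disj by (intro card_Un_disjoint) auto
  also have "\<dots> = 2 * tau n" unfolding tau_def using card_image[OF inj] by simp
  finally show ?case using insert unfolding n_def by simp
qed

lemma omega_prod_primes:
  assumes "finite B" "\<And>p. p \<in> B \<Longrightarrow> prime p"
  shows "omega (\<Prod>p\<in>B. p) = card B"
proof -
  have "prime_factors (\<Prod>p\<in>B. p) = \<Union>((prime_factors \<circ> (\<lambda>p. p)) ` B)"
    using assms by (intro prime_factors_prod) (auto dest: prime_gt_0_nat)
  also have "\<dots> = B" using assms by (auto simp: prime_prime_factors)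
  finally show ?thesis unfolding omega_def by simp
qed

lemma model_pps: "product_prob_space (\<lambda>p. measure_pmf (np_pmf p))"
  by (rule product_prob_spaceI) (simp add: prob_space_measure_pmf)

lemma prod_meas:
  assumes "finite S" "S \<subseteq> {p. prime p}"
  shows "(\<lambda>w. \<Prod>p\<in>S. w p) \<in> measurable model (count_space UNIV)"
  using assms
proof (induction S rule: finite_induct)
  case empty then show ?case by simp
next
  case (insert a S)
  have comp: "(\<lambda>w. w a) \<in> measurable model (count_space UNIV)"
  proof -
    have "(\<lambda>w. w a) \<in> measurable model (measure_pmf (np_pmf a))"
      unfolding model_def using insert by (intro measurable_component_singleton) auto
    then show ?thesis by (simp add: measurable_cong_sets[OF refl sets_measure_pmf_count_space])
  qed
  have "(\<lambda>w. (\<lambda>i w. w a * i) ((\<lambda>w. \<Prod>p\<in>S. w p) w) w) \<in> measurable model (count_space UNIV)"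
  proof (rule measurable_compose_countable[where g="\<lambda>w. \<Prod>p\<in>S. w p"])
    fix i :: nat
    show "(\<lambda>w. w a * i) \<in> measurable model (count_space UNIV)"
      using measurable_compose[OF comp, of "\<lambda>v. v * i"] by simp
  qed (use insert in auto)
  then show ?case using insert by simp
qed

lemma nlt_meas: "(\<lambda>w. n_lt w z) \<in> measurable model (count_space UNIV)"
proof -
  have fin: "finite {p::nat. prime p \<and> real p < z}"
    by (rule finite_subset[of _ "{..nat \<lceil>z\<rceil>}"]) (auto, linarith)
  show ?thesis unfolding n_lt_def by (rule prod_meas[OF fin]) auto
qed

lemma pmf_np:
  assumes "prime p"
  shows "pmf (np_pmf p) p = 1 / (real p + 1)" "pmf (np_pmf p) 1 = 1 - 1 / (real p + 1)"
    "set_pmf (np_pmf p) \<subseteq> {1, p}"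
proof -
  have p1: "p \<noteq> 1" using assms by auto
  have q: "0 \<le> 1 / (real p + 1)" "1 / (real p + 1) \<le> 1" by (auto simp: field_simps)
  have "(\<lambda>b. if b then p else 1) -` {p} = {True}" using p1 by (auto split: if_splits)
  then show "pmf (np_pmf p) p = 1 / (real p + 1)"
    unfolding np_pmf_def pmf_map using q by (simp add: measure_pmf_single)
  have "(\<lambda>b. if b then p else 1) -` {1} = {False}" using p1 by auto
  then show "pmf (np_pmf p) 1 = 1 - 1 / (real p + 1)"
    unfolding np_pmf_def pmf_map using q by (simp add: measure_pmf_single)
  show "set_pmf (np_pmf p) \<subseteq> {1, p}" unfolding np_pmf_def by auto
qed

definition mu :: "nat set \<Rightarrow> nat set \<Rightarrow> real" where
  "mu P A = (\<Prod>p\<in>P. if p \<in> A then 1 / (real p + 1) else 1 - 1 / (real p + 1))"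

lemma integral_model_sum:
  fixes x :: real and r :: nat and Y :: "real set"
  assumes finY: "finite Y" and Yx: "\<And>y. y \<in> Y \<Longrightarrow> y \<le> x"
  defines "P \<equiv> {p. prime p \<and> real p < x}"
  shows "(\<integral>w. (if omega (n_lt w x) = r then 1 else 0) *
            Max ((\<lambda>y. real (tau (n_lt w y)) / Log y) ` Y) \<partial>model)
       = (\<Sum>A\<in>Pow P. mu P A * ((if card A = r then 1 else 0) *
            Max ((\<lambda>y. real (2 ^ card {p\<in>A. real p < y}) / Log y) ` Y)))"
proof -
  interpret PS: product_prob_space "\<lambda>p. measure_pmf (np_pmf p)" "{p. prime p}"
    by (rule model_pps)
  have mdef: "model = PiM {p. prime p} (\<lambda>p. measure_pmf (np_pmf p))" unfolding model_def by simp
  have finP: "finite P" unfolding P_def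
    by (rule finite_subset[of _ "{..nat \<lceil>x\<rceil>}"]) (auto, linarith)
  define F where "F w = (if omega (n_lt w x) = r then 1 else 0) *
            Max ((\<lambda>y. real (tau (n_lt w y)) / Log y) ` Y)" for w
  define g where "g A = (if card A = r then 1 else 0) *
            Max ((\<lambda>y. real (2 ^ card {p\<in>A. real p < y}) / Log y) ` Y)" for A
  define v where "v A p = (if p \<in> A then p else 1)" for A :: "nat set" and p :: nat
  define C where "C A = {w \<in> space model. \<forall>p\<in>P. w p \<in> {v A p}}" for A
  have Fm: "F \<in> borel_measurable model"
  proof -
    have m1: "(\<lambda>w. (if omega (n_lt w x) = r then 1 else 0) :: real) \<in> borel_measurable model"
      using measurable_compose[OF nlt_meas[of x], of "\<lambda>n. if omega n = r then 1 else (0::real)"] by simp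
    have m2: "(\<lambda>w. real (tau (n_lt w y)) / Log y) \<in> borel_measurable model" for y
      using measurable_compose[OF nlt_meas[of y], of "\<lambda>n. real (tau n) / Log y"] by simp
    have m3: "(\<lambda>w. Max ((\<lambda>y. real (tau (n_lt w y)) / Log y) ` Y)) \<in> borel_measurable model"
      by (rule borel_measurable_Max[OF finY m2])
    show ?thesis unfolding F_def using m1 m3 by (rule borel_measurable_times)
  qed
  have Cs: "C A \<in> sets model" for A
  proof -
    have "C A = {w \<in> space (PiM {p. prime p} (\<lambda>p. measure_pmf (np_pmf p))). \<forall>p\<in>P. w p \<in> {v A p}}"
      unfolding C_def mdef ..
    also have "\<dots> \<in> sets (PiM {p. prime p} (\<lambda>p. measure_pmf (np_pmf p)))"
      using finP by (intro sets.sets_Collect_finite_All) (auto simp: P_def intro!: sets_Collect_single')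
    finally show ?thesis unfolding mdef .
  qed
  have AEgood: "AE w in model. \<forall>p\<in>P. w p \<in> {1, p}"
  proof (rule AE_finite_allI[OF finP])
    fix p assume "p \<in> P"
    then have pp: "prime p" unfolding P_def by simp
    have "AE u in measure_pmf (np_pmf p). u \<in> {1, p}"
      using pmf_np(3)[OF pp] by (auto simp: AE_measure_pmf_iff)
    then show "AE w in model. w p \<in> {1, p}"
      unfolding mdef using pp by (intro PS.AE_component) auto
  qed
  have AEeq: "AE w in model. F w = (\<Sum>A\<in>Pow P. g A * indicator (C A) w)"
    using AEgood
  proof (rule AE_mp, intro AE_I2 impI)
    fix w assume ws: "w \<in> space model" and good: "\<forall>p\<in>P. w p \<in> {1, p}"
    define A0 where "A0 = {p\<in>P. w p = p}"
    have A0P: "A0 \<subseteq> P" unfolding A0_def by auto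
    have wv: "w p = v A0 p" if "p \<in> P" for p
      using good that unfolding v_def A0_def by auto
    have nlt: "n_lt w z = (\<Prod>p\<in>{p\<in>A0. real p < z}. p)" if "z \<le> x" for z
    proof -
      have sub: "{p. prime p \<and> real p < z} \<subseteq> P" unfolding P_def using that by auto
      have fin: "finite {p. prime p \<and> real p < z}" using finite_subset[OF sub finP] .
      have "n_lt w z = (\<Prod>p\<in>{p. prime p \<and> real p < z}. if p \<in> A0 then p else 1)"
        unfolding n_lt_def using sub wv unfolding v_def by (intro prod.cong) auto
      also have "\<dots> = (\<Prod>p\<in>{p\<in>{p. prime p \<and> real p < z}. p \<in> A0}. p)"
        using prod.inter_filter[OF fin, of "\<lambda>p. p" "\<lambda>p. p \<in> A0"] by simp
      also have "{p\<in>{p. prime p \<and> real p < z}. p \<in> A0} = {p\<in>A0. real p < z}"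
        using A0P unfolding P_def by auto
      finally show ?thesis .
    qed
    have A0pr: "\<And>p. p \<in> A0 \<Longrightarrow> prime p" using A0P unfolding P_def by auto
    have finA0: "finite A0" using A0P finP by (auto intro: finite_subset)
    have finA: "finite {p\<in>A0. real p < z}" for z using finA0 by auto
    have "{p\<in>A0. real p < x} = A0" using A0P unfolding P_def by auto
    then have om: "omega (n_lt w x) = card A0"
      using nlt[of x] omega_prod_primes[OF finA0 A0pr] by simp
    have ta: "tau (n_lt w y) = 2 ^ card {p\<in>A0. real p < y}" if "y \<in> Y" for y
      using nlt[OF Yx[OF that]] tau_prod_primes[OF finA[of y]] A0pr by auto
    have FA: "F w = g A0"
      unfolding F_def g_def om using ta by (simp cong: image_cong)
    have ind: "indicator (C A) w = (if A = A0 then 1 else (0::real))" if "A \<in> Pow P" for A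
    proof (cases "A = A0")
      case True
      then have "w \<in> C A" unfolding C_def using ws wv by auto
      then show ?thesis using True by simp
    next
      case False
      have "w \<notin> C A"
      proof
        assume "w \<in> C A"
        then have wA: "\<forall>p\<in>P. w p = v A p" unfolding C_def by auto
        have "A = A0"
        proof (intro equalityI subsetI)
          fix p assume "p \<in> A"
          then show "p \<in> A0" using wA that unfolding A0_def v_def by auto
        next
          fix p assume p: "p \<in> A0"
          then have "prime p" "p \<in> P" using A0P unfolding P_def by auto
          then have "p \<noteq> 1" by auto
          then show "p \<in> A" using p wA \<open>p \<in> P\<close> unfolding A0_def v_def by (auto split: if_splits)
        qed
        then show False using False by simp
      qed
      then show ?thesis using False by simp
    qed
    have "(\<Sum>A\<in>Pow P. g A * indicator (C A) w) = (\<Sum>A\<in>Pow P. if A = A0 then g A else 0)"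
      using ind by (intro sum.cong) auto
    also have "\<dots> = g A0" using finP A0P by (simp add: sum.delta')
    finally show "F w = (\<Sum>A\<in>Pow P. g A * indicator (C A) w)" using FA by simp
  qed
  have measC: "measure model (C A) = mu P A" if "A \<in> Pow P" for A
  proof -
    have "emeasure model (C A) = (\<Prod>p\<in>P. emeasure (measure_pmf (np_pmf p)) {v A p})"
      unfolding C_def mdef using finP by (intro PS.emeasure_PiM_Collect) (auto simp: P_def)
    also have "\<dots> = (\<Prod>p\<in>P. ennreal (if p \<in> A then 1 / (real p + 1) else 1 - 1 / (real p + 1)))"
    proof (intro prod.cong refl)
      fix p assume "p \<in> P"
      then have pp: "prime p" unfolding P_def by simp
      show "emeasure (measure_pmf (np_pmf p)) {v A p} = ennreal (if p \<in> A then 1 / (real p + 1) else 1 - 1 / (real p + 1))"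
        unfolding v_def using pmf_np[OF pp] by (simp add: emeasure_pmf_single)
    qed
    also have "\<dots> = ennreal (mu P A)"
      unfolding mu_def by (subst prod_ennreal) (auto simp: field_simps)
    finally show ?thesis by (simp add: measure_def mu_def prod_nonneg field_simps)
  qed
  have "integral\<^sup>L model F = integral\<^sup>L model (\<lambda>w. \<Sum>A\<in>Pow P. g A * indicator (C A) w)"
  proof (rule integral_cong_AE[OF Fm _ AEeq])
    show "(\<lambda>w. \<Sum>A\<in>Pow P. g A * indicator (C A) w) \<in> borel_measurable model"
      using Cs by (intro borel_measurable_sum borel_measurable_times borel_measurable_const borel_measurable_indicator) auto
  qed
  also have "\<dots> = (\<Sum>A\<in>Pow P. g A * measure model (C A))"
  proof -
    have int: "integrable model (\<lambda>w. g A * indicator (C A) w)" for A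
      using Cs[of A] by (intro integrable_mult_right integrable_real_indicator) (auto simp: mdef PS.emeasure_eq_measure)
    have "integral\<^sup>L model (\<lambda>w. \<Sum>A\<in>Pow P. g A * indicator (C A) w) = (\<Sum>A\<in>Pow P. integral\<^sup>L model (\<lambda>w. g A * indicator (C A) w))"
      using int by (subst integral_sum') auto
    also have "\<dots> = (\<Sum>A\<in>Pow P. g A * measure model (C A))"
      using Cs by (intro sum.cong refl) (simp add: sets.Int_space_eq2)
    finally show ?thesis .
  qed
  also have "\<dots> = (\<Sum>A\<in>Pow P. mu P A * g A)"
    using measC by (intro sum.cong refl) simp
  finally show ?thesis unfolding F_def g_def .
qed


definition esym :: "nat \<Rightarrow> ('a \<Rightarrow> real) \<Rightarrow> 'a set \<Rightarrow> real" where
  "esym r c S = (\<Sum>B\<in>{B. B \<subseteq> S \<and> card B = r}. \<Prod>p\<in>B. c p)"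

lemma esym_empty: "esym r c {} = (if r = 0 then 1 else 0)"
proof -
  have h: "{B. B \<subseteq> {} \<and> card B = r} = (if r = 0 then {{}} else {})" by auto
  show ?thesis unfolding esym_def h by simp
qed

lemma esym_0: "finite S \<Longrightarrow> esym 0 c S = 1"
proof -
  assume "finite S"
  have h: "{B. B \<subseteq> S \<and> card B = 0} = {{}}"
  proof (intro equalityI subsetI)
    fix B assume B: "B \<in> {B. B \<subseteq> S \<and> card B = 0}"
    then have "finite B" using \<open>finite S\<close> by (auto intro: finite_subset)
    then show "B \<in> {{}}" using B by auto
  qed auto
  show ?thesis unfolding esym_def h by simp
qed

lemma esym_insert:
  assumes "finite S" "a \<notin> S"
  shows "esym (Suc r) c (insert a S) = esym (Suc r) c S + c a * esym r c S"
proof -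
  let ?A = "{B. B \<subseteq> S \<and> card B = Suc r}"
  let ?B = "{B. B \<subseteq> S \<and> card B = r}"
  have fin: "finite {B. B \<subseteq> T}" if "finite T" for T :: "'a set"
    using that by simp
  have eq: "{B. B \<subseteq> insert a S \<and> card B = Suc r} = ?A \<union> insert a ` ?B"
  proof (intro equalityI subsetI)
    fix B assume B: "B \<in> {B. B \<subseteq> insert a S \<and> card B = Suc r}"
    show "B \<in> ?A \<union> insert a ` ?B"
    proof (cases "a \<in> B")
      case True
      have "finite B" using B assms by (auto intro: finite_subset)
      then have "card (B - {a}) = r" using B True by simp
      moreover have "B - {a} \<subseteq> S" using B by auto
      moreover have "B = insert a (B - {a})" using True by auto
      ultimately show ?thesis by blast
    next
      case False
      then show ?thesis using B by auto
    qed
  next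
    fix B assume "B \<in> ?A \<union> insert a ` ?B"
    then show "B \<in> {B. B \<subseteq> insert a S \<and> card B = Suc r}"
    proof
      assume "B \<in> ?A" then show ?thesis by auto
    next
      assume "B \<in> insert a ` ?B"
      then obtain C where C: "C \<subseteq> S" "card C = r" "B = insert a C" by auto
      have "finite C" using C assms by (auto intro: finite_subset)
      moreover have "a \<notin> C" using C assms by auto
      ultimately show ?thesis using C by auto
    qed
  qed
  have disj: "?A \<inter> insert a ` ?B = {}" using assms by auto
  have inj: "inj_on (insert a) ?B"
    unfolding inj_on_def using assms by (metis (mono_tags, lifting) insert_ident mem_Collect_eq subset_iff)
  have finA: "finite ?A" "finite (insert a ` ?B)" using assms by auto
  have "esym (Suc r) c (insert a S) = (\<Sum>B\<in>?A. \<Prod>p\<in>B. c p) + (\<Sum>B\<in>insert a ` ?B. \<Prod>p\<in>B. c p)"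
    unfolding esym_def eq by (rule sum.union_disjoint[OF finA disj])
  also have "(\<Sum>B\<in>insert a ` ?B. \<Prod>p\<in>B. c p) = (\<Sum>C\<in>?B. \<Prod>p\<in>insert a C. c p)"
    using sum.reindex[OF inj] by (simp add: o_def)
  also have "\<dots> = (\<Sum>C\<in>?B. c a * (\<Prod>p\<in>C. c p))"
  proof (rule sum.cong[OF refl])
    fix C assume C: "C \<in> ?B"
    then have "finite C" "a \<notin> C" using assms by (auto intro: finite_subset)
    then show "(\<Prod>p\<in>insert a C. c p) = c a * (\<Prod>p\<in>C. c p)" by simp
  qed
  also have "\<dots> = c a * esym r c S" unfolding esym_def by (simp add: sum_distrib_left)
  finally show ?thesis unfolding esym_def by simp
qed

lemma esym_nonneg: "(\<And>p. p \<in> S \<Longrightarrow> c p \<ge> 0) \<Longrightarrow> esym r c S \<ge> 0"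
  unfolding esym_def by (intro sum_nonneg prod_nonneg) auto

lemma esym_mono_set:
  assumes "finite S" "S' \<subseteq> S" "\<And>p. p \<in> S \<Longrightarrow> c p \<ge> 0"
  shows "esym r c S' \<le> esym r c S"
  unfolding esym_def using assms
  by (intro sum_mono2) (auto intro!: prod_nonneg)

lemma bernoulli_pow:
  fixes s c :: real
  assumes "s \<ge> 0" "c \<ge> 0"
  shows "s^n + real n * c * s^(n - 1) \<le> (s + c)^n"
proof (induction n)
  case 0 then show ?case by simp
next
  case (Suc n)
  show ?case
  proof (cases n)
    case 0 then show ?thesis by simp
  next
    case (Suc m)
    have "s^Suc n + real (Suc n) * c * s^n = s * (s^n + real n * c * s^(n-1)) + c * s^n"
      using Suc by (simp add: algebra_simps)
    also have "\<dots> \<le> s * (s+c)^n + c * (s+c)^n"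
      using Suc.IH assms by (intro add_mono mult_left_mono power_mono) auto
    also have "\<dots> = (s+c)^Suc n" by (simp add: algebra_simps)
    finally show ?thesis by simp
  qed
qed

lemma taylor_pow:
  fixes s c :: real
  assumes "s \<ge> 0" "c \<ge> 0"
  shows "(s+c)^(Suc (Suc n)) \<le> s^(Suc (Suc n)) + real (Suc (Suc n)) * c * s^(Suc n) + (real (Suc (Suc n)) * real (Suc n) / 2) * c^2 * (s+c)^n"
proof (induction n)
  case 0 then show ?case by (simp add: power2_eq_square algebra_simps)
next
  case (Suc n)
  define X where "X = (s+c)^(Suc n)"
  have h: "real (Suc (Suc n)) * s^(Suc n) \<le> real (Suc (Suc n)) * X"
    unfolding X_def using assms by (intro mult_left_mono power_mono) auto
  have h2: "real (Suc (Suc n)) * s^(Suc n) + (real (Suc (Suc n)) * real (Suc n) / 2) * X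
      \<le> real (Suc (Suc n)) * X + (real (Suc (Suc n)) * real (Suc n) / 2) * X"
    using h by linarith
  have h3: "real (Suc (Suc n)) * X + (real (Suc (Suc n)) * real (Suc n) / 2) * X = (real (Suc (Suc (Suc n))) * real (Suc (Suc n)) / 2) * X"
    by (simp add: field_simps)
  have h5: "real (Suc (Suc n)) * s^(Suc n) + (real (Suc (Suc n)) * real (Suc n) / 2) * X
      \<le> (real (Suc (Suc (Suc n))) * real (Suc (Suc n)) / 2) * X"
    using h2 h3 by linarith
  have h4: "c^2 * (real (Suc (Suc n)) * s^(Suc n) + (real (Suc (Suc n)) * real (Suc n) / 2) * X)
      \<le> c^2 * ((real (Suc (Suc (Suc n))) * real (Suc (Suc n)) / 2) * X)"
    by (rule mult_left_mono[OF h5]) simp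
  have "(s+c)^(Suc (Suc (Suc n))) = (s+c) * (s+c)^(Suc (Suc n))" by simp
  also have "\<dots> \<le> (s+c) * (s^(Suc (Suc n)) + real (Suc (Suc n)) * c * s^(Suc n) + (real (Suc (Suc n)) * real (Suc n) / 2) * c^2 * (s+c)^n)"
    using Suc.IH assms by (intro mult_left_mono) auto
  also have "\<dots> = s^(Suc (Suc (Suc n))) + real (Suc (Suc (Suc n))) * c * s^(Suc (Suc n)) + c^2 * (real (Suc (Suc n)) * s^(Suc n) + (real (Suc (Suc n)) * real (Suc n) / 2) * X)"
    unfolding X_def by (simp add: algebra_simps power2_eq_square)
  also have "\<dots> \<le> s^(Suc (Suc (Suc n))) + real (Suc (Suc (Suc n))) * c * s^(Suc (Suc n)) + c^2 * ((real (Suc (Suc (Suc n))) * real (Suc (Suc n)) / 2) * X)"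
    using h4 by linarith
  finally show ?case unfolding X_def by (simp add: algebra_simps)
qed

lemma esym_upper:
  assumes "finite S" "\<And>p. p \<in> S \<Longrightarrow> c p \<ge> 0"
  shows "fact r * esym r c S \<le> (\<Sum>p\<in>S. c p) ^ r"
  using assms
proof (induction S arbitrary: r rule: finite_induct)
  case empty then show ?case by (simp add: esym_empty)
next
  case (insert a S)
  have ca: "c a \<ge> 0" using insert by auto
  have s: "(\<Sum>p\<in>S. c p) \<ge> 0" using insert by (auto intro: sum_nonneg)
  show ?case
  proof (cases r)
    case 0 then show ?thesis using insert by (simp add: esym_0)
  next
    case (Suc m)
    have "fact r * esym r c (insert a S) = fact (Suc m) * esym (Suc m) c S + real (Suc m) * c a * (fact m * esym m c S)"
      using Suc insert by (simp add: esym_insert algebra_simps)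
    also have "\<dots> \<le> (\<Sum>p\<in>S. c p) ^ Suc m + real (Suc m) * c a * (\<Sum>p\<in>S. c p) ^ m"
    proof -
      have I1: "fact (Suc m) * esym (Suc m) c S \<le> (\<Sum>p\<in>S. c p) ^ Suc m" using insert by blast
      have I2: "fact m * esym m c S \<le> (\<Sum>p\<in>S. c p) ^ m" using insert by blast
      have "0 \<le> real (Suc m) * c a" using ca by simp
      from add_mono[OF I1 mult_left_mono[OF I2 this]] show ?thesis .
    qed
    also have "\<dots> \<le> ((\<Sum>p\<in>S. c p) + c a) ^ Suc m"
      using bernoulli_pow[OF s ca, of "Suc m"] by simp
    finally show ?thesis using Suc insert by (simp add: add.commute)
  qed
qed

lemma esym_lower:
  assumes "finite S" "\<And>p. p \<in> S \<Longrightarrow> c p \<ge> 0"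
  shows "(\<Sum>p\<in>S. c p) ^ r - (real r * (real r - 1) / 2) * (\<Sum>p\<in>S. c p ^ 2) * (\<Sum>p\<in>S. c p) ^ (r - 2)
           \<le> fact r * esym r c S"
  using assms
proof (induction S arbitrary: r rule: finite_induct)
  case empty then show ?case by (cases r) (auto simp: esym_empty)
next
  case (insert a S)
  define s where "s = (\<Sum>p\<in>S. c p)"
  define t where "t = (\<Sum>p\<in>S. c p ^ 2)"
  have ca: "c a \<ge> 0" using insert by auto
  have s: "s \<ge> 0" unfolding s_def using insert by (auto intro: sum_nonneg)
  have t: "t \<ge> 0" unfolding t_def by (auto intro: sum_nonneg)
  have sI: "(\<Sum>p\<in>insert a S. c p) = s + c a" unfolding s_def using insert by simp
  have tI: "(\<Sum>p\<in>insert a S. c p ^ 2) = t + c a ^ 2" unfolding t_def using insert by simp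
  have IH: "s ^ k - (real k * (real k - 1) / 2) * t * s ^ (k - 2) \<le> fact k * esym k c S" for k
    using insert unfolding s_def t_def by auto
  show ?case
  proof (cases r)
    case 0 then show ?thesis using insert by (simp add: esym_0)
  next
    case (Suc m)
    note r = this
    have rec: "fact r * esym r c (insert a S) = fact (Suc m) * esym (Suc m) c S + real (Suc m) * c a * (fact m * esym m c S)"
      using Suc insert by (simp add: esym_insert algebra_simps)
    show ?thesis
    proof (cases m)
      case 0
      then have "fact r * esym r c (insert a S) = fact 1 * esym 1 c S + c a * (fact 0 * esym 0 c S)"
        using rec Suc by simp
      moreover have "fact 1 * esym 1 c S \<ge> s" using IH[of 1] by simp
      moreover have "esym 0 c S = 1" using insert by (simp add: esym_0)
      ultimately show ?thesis using Suc 0 sI by simp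
    next
      case (Suc k)
      note m = this
      have A: "s ^ Suc (Suc k) - (real (Suc (Suc k)) * real (Suc k) / 2) * t * s ^ k \<le> fact (Suc m) * esym (Suc m) c S"
        using IH[of "Suc m"] m by simp
      have B: "s ^ Suc k - (real (Suc k) * real k / 2) * t * s ^ (k - 1) \<le> fact m * esym m c S"
        using IH[of m] m by simp
      have bern: "s^k + real k * c a * s^(k - 1) \<le> (s + c a)^k" by (rule bernoulli_pow[OF s ca])
      have tay: "(s + c a)^Suc (Suc k) \<le> s^Suc (Suc k) + real (Suc (Suc k)) * c a * s^(Suc k) + (real (Suc (Suc k)) * real (Suc k) / 2) * (c a)^2 * (s + c a)^k"
        by (rule taylor_pow[OF s ca])
      have c0: "0 \<le> real (Suc m) * c a" using ca by simp
      define Y where "Y = (s + c a)^k"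
      define C2 where "C2 = real (Suc (Suc k)) * real (Suc k) / 2"
      have F4: "(s ^ Suc (Suc k) - C2 * t * s ^ k) +
            real (Suc m) * c a * (s ^ Suc k - (real (Suc k) * real k / 2) * t * s ^ (k - 1))
            \<le> fact r * esym r c (insert a S)"
        unfolding rec C2_def by (rule add_mono[OF A mult_left_mono[OF B c0]])
      have F5: "(s ^ Suc (Suc k) - C2 * t * s ^ k) +
            real (Suc m) * c a * (s ^ Suc k - (real (Suc k) * real k / 2) * t * s ^ (k - 1))
          = s^Suc (Suc k) + real (Suc (Suc k)) * c a * s^(Suc k) - C2 * t * (s^k + real k * c a * s^(k - 1))"
        using m unfolding C2_def by (simp add: field_simps)
      have F3: "C2 * t * (s^k + real k * c a * s^(k - 1)) \<le> C2 * t * Y"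
        unfolding Y_def C2_def using bern t by (intro mult_left_mono) auto
      have F1: "(\<Sum>p\<in>insert a S. c p) ^ r - (real r * (real r - 1) / 2) * (\<Sum>p\<in>insert a S. c p ^ 2) * (\<Sum>p\<in>insert a S. c p) ^ (r - 2)
          = (s + c a)^Suc (Suc k) - C2 * t * Y - C2 * (c a)^2 * Y"
        unfolding sI tI Y_def C2_def using r m by (simp add: field_simps)
      have F2: "(s + c a)^Suc (Suc k) \<le> s^Suc (Suc k) + real (Suc (Suc k)) * c a * s^(Suc k) + C2 * (c a)^2 * Y"
        using tay unfolding Y_def C2_def by simp
      show ?thesis using F1 F2 F3 F4 F5 by linarith
    qed
  qed
qed


lemma mu_factor:
  assumes "finite P" "A \<subseteq> P" "\<And>p. p \<in> P \<Longrightarrow> p > 0"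
  shows "mu P A = (\<Prod>p\<in>P. 1 - 1 / (real p + 1)) * (\<Prod>p\<in>A. 1 / real p)"
proof -
  have b: "1 / (real p + 1) = (1 - 1 / (real p + 1)) * (1 / real p)" if "p \<in> P" for p
    using assms(3)[OF that] by (simp add: field_simps)
  have "mu P A = (\<Prod>p\<in>P. (1 - 1 / (real p + 1)) * (if p \<in> A then 1 / real p else 1))"
    unfolding mu_def using b by (intro prod.cong) auto
  also have "\<dots> = (\<Prod>p\<in>P. 1 - 1 / (real p + 1)) * (\<Prod>p\<in>P. if p \<in> A then 1 / real p else 1)"
    by (rule prod.distrib)
  also have "(\<Prod>p\<in>P. if p \<in> A then 1 / real p else 1) = (\<Prod>p\<in>{p\<in>P. p \<in> A}. 1 / real p)"
    using prod.inter_filter[OF assms(1), of "\<lambda>p. 1 / real p" "\<lambda>p. p \<in> A"] by simp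
  also have "{p\<in>P. p \<in> A} = A" using assms(2) by auto
  finally show ?thesis .
qed

lemma sum_mu_esym:
  assumes "finite P" "\<And>p. p \<in> P \<Longrightarrow> p > 0"
  shows "(\<Sum>A\<in>Pow P. mu P A * ((if card A = r then 1 else 0) * (\<Prod>p\<in>A. c p)))
       = (\<Prod>p\<in>P. 1 - 1 / (real p + 1)) * esym r (\<lambda>p. c p / real p) P"
proof -
  let ?Q = "(\<Prod>p\<in>P. 1 - 1 / (real p + 1))"
  have "(\<Sum>A\<in>Pow P. mu P A * ((if card A = r then 1 else 0) * (\<Prod>p\<in>A. c p)))
      = (\<Sum>A\<in>Pow P. if card A = r then ?Q * (\<Prod>p\<in>A. c p / real p) else 0)"
  proof (intro sum.cong refl)
    fix A assume "A \<in> Pow P"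
    then have "mu P A = ?Q * (\<Prod>p\<in>A. 1 / real p)" using mu_factor assms by auto
    moreover have "(\<Prod>p\<in>A. 1 / real p) * (\<Prod>p\<in>A. c p) = (\<Prod>p\<in>A. c p / real p)"
      by (simp add: prod.distrib[symmetric])
    ultimately show "mu P A * ((if card A = r then 1 else 0) * (\<Prod>p\<in>A. c p))
      = (if card A = r then ?Q * (\<Prod>p\<in>A. c p / real p) else 0)"
      by (simp add: mult.assoc)
  qed
  also have "\<dots> = (\<Sum>A\<in>{A\<in>Pow P. card A = r}. ?Q * (\<Prod>p\<in>A. c p / real p))"
    using sum.inter_filter[of "Pow P" "\<lambda>A. ?Q * (\<Prod>p\<in>A. c p / real p)" "\<lambda>A. card A = r"] assms(1) by simp
  also have "{A\<in>Pow P. card A = r} = {B. B \<subseteq> P \<and> card B = r}" by auto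
  finally show ?thesis unfolding esym_def by (simp add: sum_distrib_left)
qed

lemma two_pow_card_prod:
  assumes "finite A"
  shows "(2::real) ^ card {p\<in>A. Q p} = (\<Prod>p\<in>A. if Q p then 2 else 1)"
proof -
  have "(\<Prod>p\<in>A. if Q p then 2 else 1) = (\<Prod>p\<in>{p\<in>A. Q p}. (2::real))"
    using prod.inter_filter[OF assms, of "\<lambda>_. 2::real" Q] by simp
  then show ?thesis by simp
qed

lemma max_ge_quad:
  fixes a :: "nat \<Rightarrow> real"
  assumes "finite K" "K \<noteq> {}" "\<And>k. k \<in> K \<Longrightarrow> 0 < a k" "\<And>k. k \<in> K \<Longrightarrow> a k \<le> M" "lam \<ge> 0"
  shows "2 * lam * (\<Sum>k\<in>K. a k) - lam^2 * (\<Sum>j\<in>K. \<Sum>k\<in>K. sqrt (a j * a k)) \<le> M"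
proof -
  define T where "T = (\<Sum>k\<in>K. a k)"
  define D where "D = (\<Sum>j\<in>K. \<Sum>k\<in>K. sqrt (a j * a k))"
  obtain k0 where k0: "k0 \<in> K" using assms(2) by auto
  have M0: "M > 0" using assms(3,4)[OF k0] by linarith
  have "D \<ge> sqrt (a k0 * a k0)"
  proof -
    have "sqrt (a k0 * a k0) \<le> (\<Sum>k\<in>K. sqrt (a k0 * a k))"
      using assms(1) k0 assms(3) by (intro member_le_sum) (auto intro!: mult_nonneg_nonneg less_imp_le)
    also have "\<dots> \<le> D" unfolding D_def
    proof (rule member_le_sum[OF k0 _ assms(1)])
      fix j assume "j \<in> K - {k0}"
      then show "0 \<le> (\<Sum>k\<in>K. sqrt (a j * a k))"
        using assms(3) by (intro sum_nonneg real_sqrt_ge_zero mult_nonneg_nonneg) (auto simp: less_imp_le)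
    qed
    finally show ?thesis .
  qed
  then have D0: "D > 0" using assms(3)[OF k0] by (smt (verit) real_sqrt_gt_zero mult_pos_pos)
  have sq: "a j * a k \<le> M * sqrt (a j * a k)" if "j \<in> K" "k \<in> K" for j k
  proof -
    have pos: "0 \<le> a j * a k" using assms(3) that by (simp add: less_imp_le)
    have "sqrt (a j * a k) \<le> M"
    proof -
      have "a j * a k \<le> M * M"
        using assms(3,4) that M0 by (intro mult_mono) (auto simp: less_imp_le)
      then have "sqrt (a j * a k) \<le> sqrt (M * M)" by (rule real_sqrt_le_mono)
      then show ?thesis using M0 by simp
    qed
    then have "sqrt (a j * a k) * sqrt (a j * a k) \<le> M * sqrt (a j * a k)"
      using pos by (intro mult_right_mono) auto
    then show ?thesis using pos by simp
  qed
  have "T^2 = (\<Sum>j\<in>K. \<Sum>k\<in>K. a j * a k)"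
    unfolding T_def power2_eq_square by (simp add: sum_product)
  also have "\<dots> \<le> (\<Sum>j\<in>K. \<Sum>k\<in>K. M * sqrt (a j * a k))"
    using sq by (intro sum_mono) auto
  also have "\<dots> = M * D" unfolding D_def by (simp add: sum_distrib_left)
  finally have TD: "T^2 \<le> M * D" .
  have "2 * lam * T - lam^2 * D \<le> T^2 / D"
  proof -
    have "0 \<le> (T - lam * D)^2 / D" using D0 by simp
    also have "(T - lam * D)^2 / D = T^2 / D - 2 * lam * T + lam^2 * D"
      using D0 by (simp add: power2_eq_square field_simps)
    finally show ?thesis by simp
  qed
  also have "T^2 / D \<le> M" using TD D0 by (simp add: field_simps)
  finally show ?thesis unfolding T_def D_def .
qed


lemma sqrt_prod: "sqrt (\<Prod>x\<in>A. f x) = (\<Prod>x\<in>A. sqrt (f x))"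
  by (induction A rule: infinite_finite_induct) (auto simp: real_sqrt_mult)

lemma pow_lower:
  fixes v :: real
  assumes "\<bar>v\<bar> \<le> 1/2"
  shows "exp (real r * v - 2 * real r * v^2) \<le> (1 + v) ^ r"
proof -
  have pos: "1 + v > 0" using assms by (simp add: abs_le_iff)
  have "\<bar>ln (1 + v) - v\<bar> \<le> 2 * v^2" using abs_ln_one_plus_x_minus_x_bound[OF assms] .
  then have "v - 2 * v^2 \<le> ln (1 + v)" by (simp add: abs_le_iff)
  then have "real r * (v - 2 * v^2) \<le> real r * ln (1 + v)" by (intro mult_left_mono) auto
  then have "exp (real r * v - 2 * real r * v^2) \<le> exp (real r * ln (1 + v))"
    by (simp add: algebra_simps)
  also have "\<dots> = (1 + v) ^ r" using pos by (simp add: exp_of_nat_mult)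
  finally show ?thesis .
qed

lemma pow_upper:
  fixes s u :: real
  assumes "0 \<le> s" "s \<le> real r + u" "r > 0"
  shows "s ^ r \<le> real r ^ r * exp u"
proof -
  have rp: "real r > 0" using assms by simp
  have "real r + u = real r * (1 + u / real r)" using rp by (simp add: field_simps)
  also have "\<dots> \<le> real r * exp (u / real r)" using rp by (intro mult_left_mono) auto
  finally have "s \<le> real r * exp (u / real r)" using assms by simp
  then have "s ^ r \<le> (real r * exp (u / real r)) ^ r" using assms by (intro power_mono) auto
  also have "\<dots> = real r ^ r * exp (real r * (u / real r))"
    by (simp add: power_mult_distrib exp_of_nat_mult[symmetric])
  also have "\<dots> = real r ^ r * exp u" using rp by simp
  finally show ?thesis .
qed

lemma stirling_ratio:
  assumes "r \<ge> (1::nat)"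
  assumes fu: "ln (fact r :: real) + real r \<le> 1 + ln (real r) / 2 + real r * ln (real r)"
  shows "exp (real r - 1) / sqrt (real r) \<le> real r ^ r / fact r"
proof -
  have rp: "real r > 0" using assms by simp
  have "ln (exp (real r - 1) / sqrt (real r)) = real r - 1 - ln (real r) / 2"
    using rp by (simp add: ln_div ln_sqrt)
  also have "\<dots> \<le> real r * ln (real r) - ln (fact r)" using fu by linarith
  also have "\<dots> = ln (real r ^ r / fact r)"
    using rp by (simp add: ln_div ln_realpow)
  finally show ?thesis
    using rp by (subst (asm) ln_le_cancel_iff) (auto intro!: divide_pos_pos)
qed

lemma Q0_lower:
  assumes "finite P" "\<And>p. p \<in> P \<Longrightarrow> p > 0"
  shows "exp (- (\<Sum>p\<in>P. 1 / real p)) \<le> (\<Prod>p\<in>P. 1 - 1 / (real p + 1))"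
proof -
  have "exp (- (\<Sum>p\<in>P. 1 / real p)) = (\<Prod>p\<in>P. exp (- (1 / real p)))"
    using assms(1) by (simp add: exp_sum[symmetric] sum_negf)
  also have "\<dots> \<le> (\<Prod>p\<in>P. 1 - 1 / (real p + 1))"
  proof (intro prod_mono conjI)
    fix p assume p: "p \<in> P"
    then have pp: "real p > 0" using assms by simp
    have "1 + 1 / real p \<le> exp (1 / real p)" by (rule exp_ge_add_one_self)
    then have "1 / exp (1 / real p) \<le> 1 / (1 + 1 / real p)"
    proof (rule divide_left_mono)
      have "0 < 1 + 1 / real p" using pp by (simp add: add_pos_pos)
      then show "0 < exp (1 / real p) * (1 + 1 / real p)" by simp
    qed (use \<open>1 + 1 / real p \<le> exp (1 / real p)\<close> in auto)
    also have "1 / (1 + 1 / real p) = 1 - 1 / (real p + 1)" using pp by (simp add: field_simps)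
    finally show "exp (- (1 / real p)) \<le> 1 - 1 / (real p + 1)" by (simp add: exp_minus inverse_eq_divide)
  qed auto
  finally show ?thesis .
qed

lemma telescope_from:
  assumes "n \<ge> (64::nat)"
  shows "(\<Sum>p=65..n. 1 / (real p * (real p - 1))) = 1/64 - 1 / real n"
  using assms
proof (induction n rule: dec_induct)
  case base then show ?case by simp
next
  case (step n)
  have n0: "real n > 0" using step(1) by simp
  have "(\<Sum>p=65..Suc n. 1 / (real p * (real p - 1))) = (\<Sum>p=65..n. 1 / (real p * (real p - 1))) + 1 / ((real n + 1) * real n)"
    using step(1) by (simp add: sum.cl_ivl_Suc)
  also have "\<dots> = 1/64 - 1 / real n + 1 / ((real n + 1) * real n)" using step(3) by simp
  also have "1 / real n - 1 / ((real n + 1) * real n) = 1 / (1 + real n)"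
    using n0 by (simp add: divide_simps)
  then have "1/64 - 1 / real n + 1 / ((real n + 1) * real n) = 1/64 - 1 / real (Suc n)"
    by (simp only: of_nat_Suc)
  finally show ?case .
qed

lemma inv_sq_sum:
  assumes "finite S" "\<And>p. p \<in> S \<Longrightarrow> p \<ge> (65::nat)"
  shows "(\<Sum>p\<in>S. 1 / real p ^ 2) \<le> 1/64"
proof (cases "S = {}")
  case False
  define N where "N = Max S"
  have N: "N \<ge> 65" using assms False unfolding N_def by (meson Max_in)
  have sub: "S \<subseteq> {65..N}" using assms unfolding N_def by auto
  have "(\<Sum>p\<in>S. 1 / real p ^ 2) \<le> (\<Sum>p=65..N. 1 / real p ^ 2)"
    using sub by (intro sum_mono2) auto
  also have "\<dots> \<le> (\<Sum>p=65..N. 1 / (real p * (real p - 1)))"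
  proof (intro sum_mono)
    fix p assume "p \<in> {65..N}"
    then have p: "real p \<ge> 65" by simp
    then show "1 / real p ^ 2 \<le> 1 / (real p * (real p - 1))"
      by (intro divide_left_mono) (auto simp: power2_eq_square intro!: mult_pos_pos)
  qed
  also have "\<dots> = 1/64 - 1 / real N" using N by (intro telescope_from) simp
  also have "\<dots> \<le> 1/64" by simp
  finally show ?thesis .
qed simp

lemma esym_num_lower:
  assumes "finite S" "\<And>p. p \<in> S \<Longrightarrow> p \<ge> 1"
    and c: "\<And>p. p \<in> S \<Longrightarrow> 0 \<le> c p \<and> c p \<le> 2 / real p"
    and r: "r \<ge> 2" and rs: "real r \<le> 4 * (\<Sum>p\<in>{p\<in>S. p \<ge> 65}. c p)"
  shows "(\<Sum>p\<in>{p\<in>S. p \<ge> 65}. c p) ^ r / (2 * fact r) \<le> esym r c S"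
proof -
  define S' where "S' = {p\<in>S. p \<ge> 65}"
  define s where "s = (\<Sum>p\<in>S'. c p)"
  define t where "t = (\<Sum>p\<in>S'. c p ^ 2)"
  have finS': "finite S'" unfolding S'_def using assms(1) by simp
  have s0: "s \<ge> 0" unfolding s_def S'_def using c by (auto intro: sum_nonneg)
  have t16: "t \<le> 1/16"
  proof -
    have "t \<le> (\<Sum>p\<in>S'. 4 * (1 / real p ^ 2))"
      unfolding t_def
    proof (intro sum_mono)
      fix p assume "p \<in> S'"
      then have cp: "0 \<le> c p" "c p \<le> 2 / real p" using c unfolding S'_def by auto
      then have "c p ^ 2 \<le> (2 / real p) ^ 2" by (intro power_mono) auto
      then show "c p ^ 2 \<le> 4 * (1 / real p ^ 2)" by (simp add: power_divide)
    qed
    also have "\<dots> = 4 * (\<Sum>p\<in>S'. 1 / real p ^ 2)" by (simp add: sum_distrib_left)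
    also have "\<dots> \<le> 4 * (1/64)"
      using inv_sq_sum[OF finS'] unfolding S'_def by (intro mult_left_mono) auto
    finally show ?thesis by simp
  qed
  have t0: "t \<ge> 0" unfolding t_def by (auto intro: sum_nonneg)
  have low: "s ^ r - (real r * (real r - 1) / 2) * t * s ^ (r - 2) \<le> fact r * esym r c S'"
    unfolding s_def t_def using esym_lower[OF finS', of c r] c unfolding S'_def by auto
  have rs': "real r \<le> 4 * s" using rs unfolding s_def S'_def .
  have "(real r * (real r - 1) / 2) * t \<le> (16 * s^2 / 2) * (1/16)"
  proof (intro mult_mono)
    have "real r * (real r - 1) \<le> real r * real r" by (intro mult_left_mono) auto
    also have "\<dots> \<le> (4 * s) * (4 * s)" using rs' by (intro mult_mono) auto
    finally show "real r * (real r - 1) / 2 \<le> 16 * s^2 / 2" by (simp add: power2_eq_square)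
  qed (use t16 t0 s0 in auto)
  then have "(real r * (real r - 1) / 2) * t * s ^ (r - 2) \<le> (s^2 / 2) * s ^ (r - 2)"
    using s0 by (intro mult_right_mono) auto
  also have "(s^2 / 2) * s ^ (r - 2) = s ^ r / 2"
  proof -
    have e: "2 + (r-2) = r" using r by simp
    have "s^r = s^(2 + (r-2))" by (simp only: e)
    also have "\<dots> = s^2 * s^(r-2)" by (rule power_add)
    finally show ?thesis by simp
  qed
  finally have "s ^ r / 2 \<le> fact r * esym r c S'" using low by simp
  moreover have "esym r c S' \<le> esym r c S"
    using assms(1) c by (intro esym_mono_set) (auto simp: S'_def)
  ultimately have "s ^ r / 2 \<le> fact r * esym r c S"
    by (smt (verit) fact_ge_zero mult_left_mono)
  then show ?thesis unfolding s_def S'_def by (simp add: field_simps)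
qed

definition ndist :: "nat \<Rightarrow> nat \<Rightarrow> nat" where
  "ndist j k = (if j \<le> k then k - j else j - k)"

lemma geom_le:
  fixes rho :: real
  assumes "0 \<le> rho" "rho < 1" and that: "finite D"
  shows "(\<Sum>d\<in>D. rho ^ d) \<le> 1 / (1 - rho)"
proof -
  define N where "N = Suc (Max (insert 0 D))"
  have "D \<subseteq> {..<N}" unfolding N_def using that by (auto simp: le_imp_less_Suc)
  then have "(\<Sum>d\<in>D. rho ^ d) \<le> (\<Sum>d<N. rho ^ d)"
    using assms by (intro sum_mono2) auto
  also have "\<dots> = (1 - rho ^ N) / (1 - rho)" using assms by (simp add: sum_gp_strict)
  also have "\<dots> \<le> 1 / (1 - rho)" using assms by (intro divide_right_mono) auto
  finally show ?thesis .
qed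

lemma geom_dist:
  fixes rho :: real
  assumes "0 \<le> rho" "rho < 1" "finite K"
  shows "(\<Sum>k\<in>K. rho ^ ndist j k) \<le> 2 / (1 - rho)"
proof -
  have split: "(\<Sum>k\<in>K. rho ^ ndist j k) = (\<Sum>k\<in>K \<inter> {j..}. rho ^ (k - j)) + (\<Sum>k\<in>K - {j..}. rho ^ (j - k))"
  proof -
    have "(\<Sum>k\<in>K. rho ^ ndist j k) = (\<Sum>k\<in>K \<inter> {j..}. rho ^ ndist j k) + (\<Sum>k\<in>K - {j..}. rho ^ ndist j k)"
      using assms(3) by (rule sum.Int_Diff)
    moreover have "(\<Sum>k\<in>K \<inter> {j..}. rho ^ ndist j k) = (\<Sum>k\<in>K \<inter> {j..}. rho ^ (k - j))"
      by (intro sum.cong) (auto simp: ndist_def)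
    moreover have "(\<Sum>k\<in>K - {j..}. rho ^ ndist j k) = (\<Sum>k\<in>K - {j..}. rho ^ (j - k))"
      by (intro sum.cong) (auto simp: ndist_def)
    ultimately show ?thesis by simp
  qed
  have inj1: "inj_on (\<lambda>k. k - j) (K \<inter> {j..})" by (auto simp: inj_on_def)
  have inj2: "inj_on (\<lambda>k. j - k) (K - {j..})" by (auto simp: inj_on_def)
  have "(\<Sum>k\<in>K \<inter> {j..}. rho ^ (k - j)) = (\<Sum>d\<in>(\<lambda>k. k - j) ` (K \<inter> {j..}). rho ^ d)"
    using sum.reindex[OF inj1, of "\<lambda>d. rho ^ d"] by (simp add: o_def)
  also have "\<dots> \<le> 1 / (1 - rho)" using assms by (intro geom_le) auto
  finally have A: "(\<Sum>k\<in>K \<inter> {j..}. rho ^ (k - j)) \<le> 1 / (1 - rho)" .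
  have "(\<Sum>k\<in>K - {j..}. rho ^ (j - k)) = (\<Sum>d\<in>(\<lambda>k. j - k) ` (K - {j..}). rho ^ d)"
    using sum.reindex[OF inj2, of "\<lambda>d. rho ^ d"] by (simp add: o_def)
  also have "\<dots> \<le> 1 / (1 - rho)" using assms by (intro geom_le) auto
  finally have B: "(\<Sum>k\<in>K - {j..}. rho ^ (j - k)) \<le> 1 / (1 - rho)" .
  show ?thesis using split A B by simp
qed


lemma mu_nonneg: "mu P A \<ge> 0"
  unfolding mu_def by (intro prod_nonneg) (auto simp: field_simps)

lemma sum_lower_esym:
  fixes P K :: "nat set" and Y :: "real set" and y :: "nat \<Rightarrow> real" and lam :: real
  assumes finP: "finite P" and Ppos: "\<And>p. p \<in> P \<Longrightarrow> p > 0"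
    and finK: "finite K" and Kne: "K \<noteq> {}" and finY: "finite Y"
    and yY: "\<And>k. k \<in> K \<Longrightarrow> y k \<in> Y" and Logy: "\<And>k. k \<in> K \<Longrightarrow> Log (y k) = 2 ^ k"
    and lam: "lam \<ge> 0"
  defines "u \<equiv> \<lambda>k p. if real p < y k then 2 else (1::real)"
  shows "(\<Prod>p\<in>P. 1 - 1 / (real p + 1)) *
          (2 * lam * (\<Sum>k\<in>K. esym r (\<lambda>p. u k p / real p) P / 2 ^ k)
           - lam^2 * (\<Sum>j\<in>K. \<Sum>k\<in>K. esym r (\<lambda>p. sqrt (u j p * u k p) / real p) P / sqrt (2 ^ j * 2 ^ k)))
    \<le> (\<Sum>A\<in>Pow P. mu P A * ((if card A = r then 1 else 0) *
            Max ((\<lambda>y. real (2 ^ card {p\<in>A. real p < y}) / Log y) ` Y)))"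
proof -
  let ?Q = "(\<Prod>p\<in>P. 1 - 1 / (real p + 1))"
  define Z where "Z A = (if card A = r then 1 else (0::real))" for A :: "nat set"
  define f where "f k A = (\<Prod>p\<in>A. u k p) / 2 ^ k" for k A
  define h where "h j k A = (\<Prod>p\<in>A. sqrt (u j p * u k p)) / sqrt (2 ^ j * 2 ^ k)" for j k A
  define G where "G A = Max ((\<lambda>y. real (2 ^ card {p\<in>A. real p < y}) / Log y) ` Y)" for A
  have upos: "u k p > 0" for k p unfolding u_def by simp
  have pointwise: "Z A * (2 * lam * (\<Sum>k\<in>K. f k A) - lam^2 * (\<Sum>j\<in>K. \<Sum>k\<in>K. h j k A)) \<le> Z A * G A"
    if A: "A \<in> Pow P" for A
  proof -
    have finA: "finite A" using A finP by (auto intro: finite_subset)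
    have fval: "f k A = real (2 ^ card {p\<in>A. real p < y k}) / Log (y k)" if "k \<in> K" for k
      unfolding f_def Logy[OF that] u_def using two_pow_card_prod[OF finA, of "\<lambda>p. real p < y k"] by simp
    have fpos: "0 < f k A" for k unfolding f_def using upos by (auto intro!: prod_pos divide_pos_pos)
    have fle: "f k A \<le> G A" if "k \<in> K" for k
      unfolding G_def fval[OF that] using finY yY[OF that] by (intro Max_ge) auto
    have hval: "h j k A = sqrt (f j A * f k A)" for j k
    proof -
      have "f j A * f k A = (\<Prod>p\<in>A. u j p * u k p) / (2 ^ j * 2 ^ k)"
        unfolding f_def by (simp add: prod.distrib)
      then show ?thesis unfolding h_def by (simp add: real_sqrt_divide sqrt_prod)
    qed
    have "2 * lam * (\<Sum>k\<in>K. f k A) - lam^2 * (\<Sum>j\<in>K. \<Sum>k\<in>K. h j k A) \<le> G A"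
      unfolding hval using max_ge_quad[OF finK Kne, of "\<lambda>k. f k A" "G A" lam] fpos fle lam by auto
    then show ?thesis unfolding Z_def by simp
  qed
  have ineq: "(\<Sum>A\<in>Pow P. mu P A * (Z A * (2 * lam * (\<Sum>k\<in>K. f k A) - lam^2 * (\<Sum>j\<in>K. \<Sum>k\<in>K. h j k A))))
      \<le> (\<Sum>A\<in>Pow P. mu P A * (Z A * G A))"
  proof (rule sum_mono)
    fix A assume A: "A \<in> Pow P"
    show "mu P A * (Z A * (2 * lam * (\<Sum>k\<in>K. f k A) - lam^2 * (\<Sum>j\<in>K. \<Sum>k\<in>K. h j k A))) \<le> mu P A * (Z A * G A)"
      by (rule mult_left_mono[OF pointwise[OF A] mu_nonneg])
  qed
  have eq: "(\<Sum>A\<in>Pow P. mu P A * (Z A * (2 * lam * (\<Sum>k\<in>K. f k A) - lam^2 * (\<Sum>j\<in>K. \<Sum>k\<in>K. h j k A))))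
      = 2 * lam * (\<Sum>k\<in>K. (\<Sum>A\<in>Pow P. mu P A * (Z A * (\<Prod>p\<in>A. u k p))) / 2 ^ k)
        - lam^2 * (\<Sum>j\<in>K. \<Sum>k\<in>K. (\<Sum>A\<in>Pow P. mu P A * (Z A * (\<Prod>p\<in>A. sqrt (u j p * u k p)))) / sqrt (2 ^ j * 2 ^ k))"
  proof -
    have e1: "(\<Sum>A\<in>Pow P. mu P A * (Z A * (\<Sum>k\<in>K. f k A))) = (\<Sum>k\<in>K. (\<Sum>A\<in>Pow P. mu P A * (Z A * (\<Prod>p\<in>A. u k p))) / 2 ^ k)"
    proof -
      have "(\<Sum>A\<in>Pow P. mu P A * (Z A * (\<Sum>k\<in>K. f k A))) = (\<Sum>A\<in>Pow P. \<Sum>k\<in>K. mu P A * (Z A * f k A))"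
        by (simp add: sum_distrib_left)
      also have "\<dots> = (\<Sum>k\<in>K. \<Sum>A\<in>Pow P. mu P A * (Z A * f k A))" by (rule sum.swap)
      also have "\<dots> = (\<Sum>k\<in>K. (\<Sum>A\<in>Pow P. mu P A * (Z A * (\<Prod>p\<in>A. u k p))) / 2 ^ k)"
        unfolding f_def by (simp add: sum_divide_distrib)
      finally show ?thesis .
    qed
    have e2: "(\<Sum>A\<in>Pow P. mu P A * (Z A * (\<Sum>j\<in>K. \<Sum>k\<in>K. h j k A)))
        = (\<Sum>j\<in>K. \<Sum>k\<in>K. (\<Sum>A\<in>Pow P. mu P A * (Z A * (\<Prod>p\<in>A. sqrt (u j p * u k p)))) / sqrt (2 ^ j * 2 ^ k))"
    proof -
      have "(\<Sum>A\<in>Pow P. mu P A * (Z A * (\<Sum>j\<in>K. \<Sum>k\<in>K. h j k A))) = (\<Sum>A\<in>Pow P. \<Sum>j\<in>K. \<Sum>k\<in>K. mu P A * (Z A * h j k A))"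
        by (simp add: sum_distrib_left)
      also have "\<dots> = (\<Sum>j\<in>K. \<Sum>A\<in>Pow P. \<Sum>k\<in>K. mu P A * (Z A * h j k A))" by (rule sum.swap)
      also have "\<dots> = (\<Sum>j\<in>K. \<Sum>k\<in>K. \<Sum>A\<in>Pow P. mu P A * (Z A * h j k A))"
        by (intro sum.cong refl) (rule sum.swap)
      also have "\<dots> = (\<Sum>j\<in>K. \<Sum>k\<in>K. (\<Sum>A\<in>Pow P. mu P A * (Z A * (\<Prod>p\<in>A. sqrt (u j p * u k p)))) / sqrt (2 ^ j * 2 ^ k))"
        unfolding h_def by (simp add: sum_divide_distrib)
      finally show ?thesis .
    qed
    have "(\<Sum>A\<in>Pow P. mu P A * (Z A * (2 * lam * (\<Sum>k\<in>K. f k A) - lam^2 * (\<Sum>j\<in>K. \<Sum>k\<in>K. h j k A))))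
        = 2 * lam * (\<Sum>A\<in>Pow P. mu P A * (Z A * (\<Sum>k\<in>K. f k A))) - lam^2 * (\<Sum>A\<in>Pow P. mu P A * (Z A * (\<Sum>j\<in>K. \<Sum>k\<in>K. h j k A)))"
      by (simp add: sum_subtractf sum_distrib_left algebra_simps)
    then show ?thesis unfolding e1 e2 .
  qed
  have e3: "(\<Sum>A\<in>Pow P. mu P A * (Z A * (\<Prod>p\<in>A. u k p))) = ?Q * esym r (\<lambda>p. u k p / real p) P" for k
    unfolding Z_def by (rule sum_mu_esym[OF finP Ppos])
  have e4: "(\<Sum>A\<in>Pow P. mu P A * (Z A * (\<Prod>p\<in>A. sqrt (u j p * u k p)))) = ?Q * esym r (\<lambda>p. sqrt (u j p * u k p) / real p) P" for j k
    unfolding Z_def by (rule sum_mu_esym[OF finP Ppos])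
  have e5: "2 * lam * (\<Sum>k\<in>K. ?Q * esym r (\<lambda>p. u k p / real p) P / 2 ^ k)
        - lam^2 * (\<Sum>j\<in>K. \<Sum>k\<in>K. ?Q * esym r (\<lambda>p. sqrt (u j p * u k p) / real p) P / sqrt (2 ^ j * 2 ^ k))
      = ?Q * (2 * lam * (\<Sum>k\<in>K. esym r (\<lambda>p. u k p / real p) P / 2 ^ k)
           - lam^2 * (\<Sum>j\<in>K. \<Sum>k\<in>K. esym r (\<lambda>p. sqrt (u j p * u k p) / real p) P / sqrt (2 ^ j * 2 ^ k)))"
    by (simp add: sum_distrib_left right_diff_distrib mult_ac)
  have "?Q * (2 * lam * (\<Sum>k\<in>K. esym r (\<lambda>p. u k p / real p) P / 2 ^ k)
           - lam^2 * (\<Sum>j\<in>K. \<Sum>k\<in>K. esym r (\<lambda>p. sqrt (u j p * u k p) / real p) P / sqrt (2 ^ j * 2 ^ k)))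
      \<le> (\<Sum>A\<in>Pow P. mu P A * (Z A * G A))"
    using ineq unfolding eq e3 e4 e5 .
  then show ?thesis unfolding Z_def G_def .
qed


lemma primesum_nonneg: "primesum z \<ge> 0"
  unfolding primesum_def by (intro sum_nonneg) auto

lemma finite_primes_below: "finite {p::nat. prime p \<and> real p < z}"
  by (rule finite_subset[of _ "{..nat \<lceil>z\<rceil>}"]) (auto, linarith)

lemma sum_P_filter:
  assumes "z \<le> x"
  shows "(\<Sum>p\<in>{p. prime p \<and> real p < x}. if real p < z then f p else 0) = (\<Sum>p | prime p \<and> real p < z. f p)"
proof -
  have "(\<Sum>p\<in>{p. prime p \<and> real p < x}. if real p < z then f p else 0)
      = (\<Sum>p\<in>{p\<in>{p. prime p \<and> real p < x}. real p < z}. f p)"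
    using sum.inter_filter[OF finite_primes_below[of x], of f "\<lambda>p. real p < z"] by simp
  also have "{p\<in>{p. prime p \<and> real p < x}. real p < z} = {p. prime p \<and> real p < z}"
    using assms by auto
  finally show ?thesis .
qed

lemma numer_bound:
  fixes x L al B :: real and r k :: nat
  defines "P \<equiv> {p. prime p \<and> real p < x}"
  defines "B1 \<equiv> 2 * B + 2 * primesum 65"
  defines "u \<equiv> \<lambda>p. if real p < exp (2 ^ k) then 2 else (1::real)"
  assumes r: "real r = L + al * L" and L4: "L \<ge> 4"
    and Fx: "primesum x \<ge> L - B" and Fk: "primesum (exp (2 ^ k)) \<ge> real k * ln 2 - B"
    and yx: "exp (2 ^ k) \<le> x" and kK: "\<bar>real k * ln 2 - al * L\<bar> \<le> sqrt L"
    and c1: "sqrt L + B1 \<le> L / 2" and c2: "2 * B1^2 \<le> L"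
    and al: "al \<ge> 0" and B0: "B \<ge> 0"
  shows "(real r ^ r / fact r) * exp (- (al * L)) * (exp (- B1 - 6) / 2) \<le> esym r (\<lambda>p. u p / real p) P / 2 ^ k"
proof -
  define S' where "S' = {p\<in>P. p \<ge> 65}"
  define s where "s = (\<Sum>p\<in>S'. u p / real p)"
  define dl where "dl = real k * ln 2 - al * L"
  have finP: "finite P" unfolding P_def by (rule finite_primes_below)
  have rL: "real r \<ge> L" using r al L4 by simp
  have r2: "r \<ge> 2" using rL L4 by linarith
  have B10: "B1 \<ge> 0" unfolding B1_def using B0 primesum_nonneg[of 65] by simp
  have sumP: "(\<Sum>p\<in>P. u p / real p) = primesum x + primesum (exp (2 ^ k))"
  proof -
    have "(\<Sum>p\<in>P. u p / real p) = (\<Sum>p\<in>P. 1 / real p + (if real p < exp (2 ^ k) then 1 / real p else 0))"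
      unfolding u_def by (intro sum.cong) auto
    also have "\<dots> = (\<Sum>p\<in>P. 1 / real p) + (\<Sum>p\<in>P. if real p < exp (2 ^ k) then 1 / real p else 0)"
      by (rule sum.distrib)
    also have "(\<Sum>p\<in>P. if real p < exp (2 ^ k) then 1 / real p else 0) = primesum (exp (2 ^ k))"
      unfolding P_def primesum_def using yx by (rule sum_P_filter)
    also have "(\<Sum>p\<in>P. 1 / real p) = primesum x" unfolding P_def primesum_def ..
    finally show ?thesis .
  qed
  have small: "(\<Sum>p\<in>P - S'. u p / real p) \<le> 2 * primesum 65"
  proof -
    have "(\<Sum>p\<in>P - S'. u p / real p) \<le> (\<Sum>p\<in>P - S'. 2 * (1 / real p))"
      unfolding u_def by (intro sum_mono) (auto simp: divide_right_mono)
    also have "\<dots> = 2 * (\<Sum>p\<in>P - S'. 1 / real p)" by (simp add: sum_distrib_left)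
    also have "(\<Sum>p\<in>P - S'. 1 / real p) \<le> (\<Sum>p | prime p \<and> real p < 65. 1 / real p)"
    proof (rule sum_mono2[OF finite_primes_below])
      show "P - S' \<subseteq> {p. prime p \<and> real p < 65}" unfolding P_def S'_def by auto
    qed auto
    finally show ?thesis unfolding primesum_def by simp
  qed
  have "s = (\<Sum>p\<in>P. u p / real p) - (\<Sum>p\<in>P - S'. u p / real p)"
  proof -
    have "S' \<subseteq> P" unfolding S'_def by auto
    then show ?thesis unfolding s_def using sum_diff[OF finP \<open>S' \<subseteq> P\<close>, of "\<lambda>p. u p / real p"]
      by (simp add: Diff_Diff_Int Int_absorb1 \<open>S' \<subseteq> P\<close>)
  qed
  then have s_ge: "s \<ge> real r + dl - B1"
    using sumP small Fx Fk r unfolding dl_def B1_def by linarith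
  have dl_abs: "\<bar>dl - B1\<bar> \<le> sqrt L + B1" using kK B10 unfolding dl_def by (simp add: abs_le_iff)
  have dl_half: "\<bar>dl - B1\<bar> \<le> real r / 2" using dl_abs c1 rL by linarith
  have base0: "real r + dl - B1 \<ge> 0" using abs_le_D2[OF dl_half] rL L4 by linarith
  have rs: "real r \<le> 4 * s" using s_ge abs_le_D2[OF dl_half] by linarith
  have cbound: "\<And>p. p \<in> P \<Longrightarrow> 0 \<le> u p / real p \<and> u p / real p \<le> 2 / real p"
    unfolding u_def by (auto simp: divide_right_mono)
  have Ppos: "\<And>p. p \<in> P \<Longrightarrow> p \<ge> 1" unfolding P_def using prime_ge_1_nat by auto
  have E: "s ^ r / (2 * fact r) \<le> esym r (\<lambda>p. u p / real p) P"
    using esym_num_lower[OF finP Ppos cbound r2] rs unfolding s_def S'_def by blast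
  have "(real r + dl - B1) ^ r \<le> s ^ r" using base0 s_ge by (intro power_mono) auto
  moreover have "(real r + dl - B1) ^ r = real r ^ r * (1 + (dl - B1) / real r) ^ r"
  proof -
    have "real r + dl - B1 = real r * (1 + (dl - B1) / real r)" using r2 by (simp add: field_simps)
    then show ?thesis by (simp add: power_mult_distrib)
  qed
  moreover have "exp (dl - B1 - 6) \<le> (1 + (dl - B1) / real r) ^ r"
  proof -
    have v: "\<bar>(dl - B1) / real r\<bar> \<le> 1/2" using dl_half r2 by (simp add: abs_divide divide_le_eq)
    have "(dl - B1)^2 \<le> 3 * real r"
    proof -
      have "\<bar>dl - B1\<bar>^2 \<le> (sqrt L + B1)^2" by (rule power_mono[OF dl_abs]) simp
      then have "(dl - B1)^2 \<le> (sqrt L + B1)^2" by simp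
      also have "\<dots> \<le> 2 * L + 2 * B1^2"
      proof -
        have "(sqrt L + B1)^2 = 2*(sqrt L)^2 + 2*B1^2 - (sqrt L - B1)^2" by (simp add: power2_eq_square algebra_simps)
        moreover have "(sqrt L)^2 = L" using L4 by simp
        moreover have "0 \<le> (sqrt L - B1)^2" by simp
        ultimately show ?thesis by linarith
      qed
      also have "\<dots> \<le> 3 * real r" using c2 rL by linarith
      finally show ?thesis .
    qed
    moreover have "2 * real r * ((dl - B1) / real r)^2 = 2 * (dl - B1)^2 / real r"
      using r2 by (simp add: power2_eq_square field_simps)
    moreover have "2 * (dl - B1)^2 / real r \<le> 6"
      using \<open>(dl - B1)^2 \<le> 3 * real r\<close> r2 by (simp add: divide_le_eq)
    ultimately have "2 * real r * ((dl - B1) / real r)^2 \<le> 6" by linarith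
    moreover have "real r * ((dl - B1) / real r) = dl - B1" using r2 by simp
    ultimately have "dl - B1 - 6 \<le> real r * ((dl - B1) / real r) - 2 * real r * ((dl - B1) / real r)^2"
      by linarith
    then have "exp (dl - B1 - 6) \<le> exp (real r * ((dl - B1) / real r) - 2 * real r * ((dl - B1) / real r)^2)"
      by simp
    also have "\<dots> \<le> (1 + (dl - B1) / real r) ^ r" by (rule pow_lower[OF v])
    finally show ?thesis .
  qed
  ultimately have "real r ^ r * exp (dl - B1 - 6) \<le> s ^ r"
    by (smt (verit) mult_left_mono zero_le_power of_nat_0_le_iff)
  then have "real r ^ r * exp (dl - B1 - 6) / (2 * fact r) \<le> s ^ r / (2 * fact r)"
    by (intro divide_right_mono) auto
  then have "real r ^ r * exp (dl - B1 - 6) / (2 * fact r) \<le> esym r (\<lambda>p. u p / real p) P"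
    using E by linarith
  then have "real r ^ r * exp (dl - B1 - 6) / (2 * fact r) / 2 ^ k \<le> esym r (\<lambda>p. u p / real p) P / 2 ^ k"
    by (intro divide_right_mono) auto
  moreover have "real r ^ r * exp (dl - B1 - 6) / (2 * fact r) / 2 ^ k = (real r ^ r / fact r) * exp (- (al * L)) * (exp (- B1 - 6) / 2)"
  proof -
    have "(2::real) ^ k = exp (real k * ln 2)" by (simp add: exp_of_nat_mult)
    then have "exp (dl - B1 - 6) / 2 ^ k = exp (- (al * L)) * exp (- B1 - 6)"
      unfolding dl_def by (simp add: exp_diff[symmetric] exp_add[symmetric])
    then show ?thesis by (simp add: field_simps)
  qed
  ultimately show ?thesis by simp
qed

definition uu :: "nat \<Rightarrow> nat \<Rightarrow> real" where
  "uu i p = (if real p < exp (2 ^ i) then 2 else 1)"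

definition rho :: real where
  "rho = exp (ln 2 * (sqrt 2 - 3/2))"

lemma sqrt2_bounds: "1 \<le> sqrt (2::real)" "sqrt (2::real) \<le> 2" "sqrt (2::real) < 3/2"
proof -
  show "1 \<le> sqrt (2::real)" by simp
  show "sqrt (2::real) \<le> 2" by (rule real_sqrt_le_iff[THEN iffD2, of 2 4, simplified]) 
  have "sqrt (2::real) < sqrt (9/4)" by (subst real_sqrt_less_iff) simp
  also have "sqrt (9/4::real) = 3/2" by (simp add: real_sqrt_divide)
  finally show "sqrt (2::real) < 3/2" .
qed

lemma rho_bounds: "0 \<le> rho" "rho < 1"
  unfolding rho_def using sqrt2_bounds(3) by (auto simp: mult_pos_neg)

lemma denom_bound_le:
  fixes x L al B :: real and r j k :: nat
  defines "P \<equiv> {p. prime p \<and> real p < x}"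
  assumes r: "real r = L + al * L" and r1: "r \<ge> 1"
    and Fx: "primesum x \<le> L + B"
    and Fj: "\<bar>primesum (exp (2 ^ j)) - real j * ln 2\<bar> \<le> B"
    and Fk: "\<bar>primesum (exp (2 ^ k)) - real k * ln 2\<bar> \<le> B"
    and yx: "exp (2 ^ k) \<le> x" and jk: "j \<le> k" and B0: "B \<ge> 0"
  shows "esym r (\<lambda>p. sqrt (uu j p * uu k p) / real p) P / sqrt (2 ^ j * 2 ^ k)
     \<le> (real r ^ r / fact r) * exp (- (al * L)) * exp (4 * B) * rho ^ ndist j k"
proof -
  define a where "a = exp ((2::real) ^ j)"
  define b where "b = exp ((2::real) ^ k)"
  have ab: "a \<le> b" unfolding a_def b_def using jk by simp
  have finP: "finite P" unfolding P_def by (rule finite_primes_below)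
  have ax: "a \<le> x" using ab yx unfolding b_def by simp
  have w: "sqrt (uu j p * uu k p) = 1 + (if real p < a then 1 else 0) + (sqrt 2 - 1) * ((if real p < b then 1 else 0) - (if real p < a then 1 else 0))" for p
    unfolding uu_def a_def[symmetric] b_def[symmetric] using ab by (auto simp: real_sqrt_mult[symmetric])
  define s where "s = (\<Sum>p\<in>P. sqrt (uu j p * uu k p) / real p)"
  have ssum: "s = primesum x + primesum a + (sqrt 2 - 1) * (primesum b - primesum a)"
  proof -
    have "s = (\<Sum>p\<in>P. 1 / real p + (if real p < a then 1 / real p else 0)
          + (sqrt 2 - 1) * ((if real p < b then 1 / real p else 0) - (if real p < a then 1 / real p else 0)))"
      unfolding s_def w using ab by (intro sum.cong) (auto simp: field_simps)
    also have "\<dots> = (\<Sum>p\<in>P. 1 / real p) + (\<Sum>p\<in>P. if real p < a then 1 / real p else 0)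
          + (sqrt 2 - 1) * ((\<Sum>p\<in>P. if real p < b then 1 / real p else 0) - (\<Sum>p\<in>P. if real p < a then 1 / real p else 0))"
      by (simp add: sum.distrib sum_subtractf sum_distrib_left[symmetric])
    also have "(\<Sum>p\<in>P. if real p < a then 1 / real p else 0) = primesum a"
      unfolding P_def primesum_def using ax by (rule sum_P_filter)
    also have "(\<Sum>p\<in>P. if real p < b then 1 / real p else 0) = primesum b"
      unfolding P_def primesum_def using yx unfolding b_def by (rule sum_P_filter)
    also have "(\<Sum>p\<in>P. 1 / real p) = primesum x" unfolding P_def primesum_def ..
    finally show ?thesis .
  qed
  define dl where "dl = real j * ln 2 - al * L"
  define v where "v = dl + (sqrt 2 - 1) * (real (k - j) * ln 2) + 4 * B"
  have s_le: "s \<le> real r + v"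
  proof -
    have d: "primesum b - primesum a \<le> real (k - j) * ln 2 + 2 * B"
      using Fj Fk jk unfolding a_def b_def by (simp add: abs_le_iff of_nat_diff algebra_simps)
    have "(sqrt 2 - 1) * (primesum b - primesum a) \<le> (sqrt 2 - 1) * (real (k - j) * ln 2 + 2 * B)"
      using d sqrt2_bounds by (intro mult_left_mono) auto
    also have "\<dots> \<le> (sqrt 2 - 1) * (real (k - j) * ln 2) + 2 * B"
      using sqrt2_bounds B0 by (simp add: distrib_left mult_left_le_one_le)
    finally have "(sqrt 2 - 1) * (primesum b - primesum a) \<le> (sqrt 2 - 1) * (real (k - j) * ln 2) + 2 * B" .
    moreover have "primesum a \<le> real j * ln 2 + B" using Fj unfolding a_def by (simp add: abs_le_iff)
    ultimately show ?thesis using ssum Fx r unfolding v_def dl_def by linarith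
  qed
  have s0: "s \<ge> 0" unfolding s_def by (intro sum_nonneg) (auto simp: uu_def)
  have "fact r * esym r (\<lambda>p. sqrt (uu j p * uu k p) / real p) P \<le> s ^ r"
    unfolding s_def by (rule esym_upper[OF finP]) (auto simp: uu_def)
  also have "\<dots> \<le> real r ^ r * exp v" using pow_upper[OF s0 s_le] r1 by simp
  finally have E: "esym r (\<lambda>p. sqrt (uu j p * uu k p) / real p) P \<le> real r ^ r * exp v / fact r"
    by (simp add: field_simps)
  have sq: "sqrt ((2::real) ^ j * 2 ^ k) = exp ((real j + real k) * ln 2 / 2)"
  proof -
    have "(2::real) ^ j * 2 ^ k = exp ((real j + real k) * ln 2)"
      by (simp add: exp_of_nat_mult distrib_right exp_add)
    moreover have "sqrt (exp t) = exp (t / 2)" for t :: real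
    proof (rule real_sqrt_unique)
      show "(exp (t / 2))^2 = exp t" by (simp add: power2_eq_square exp_add[symmetric])
    qed simp
    ultimately show ?thesis by simp
  qed
  have rn: "rho ^ n = exp (real n * (ln 2 * (sqrt 2 - 3/2)))" for n
    unfolding rho_def by (simp add: exp_of_nat_mult)
  have nd: "ndist j k = k - j" using jk unfolding ndist_def by simp
  have rhok: "rho ^ ndist j k = exp (real (k - j) * (ln 2 * (sqrt 2 - 3/2)))"
    by (simp only: nd rn)
  have "exp v / sqrt ((2::real) ^ j * 2 ^ k) = exp (- (al * L)) * exp (4 * B) * rho ^ ndist j k"
  proof -
    have "v - (real j + real k) * ln 2 / 2 = - (al * L) + 4 * B + real (k - j) * (ln 2 * (sqrt 2 - 3/2))"
      unfolding v_def dl_def using jk by (simp add: of_nat_diff field_simps)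
    then have "exp v / exp ((real j + real k) * ln 2 / 2) = exp (- (al * L)) * exp (4 * B) * exp (real (k - j) * (ln 2 * (sqrt 2 - 3/2)))"
      by (simp add: exp_diff[symmetric] exp_add[symmetric])
    then show ?thesis unfolding sq rhok .
  qed
  moreover have "esym r (\<lambda>p. sqrt (uu j p * uu k p) / real p) P / sqrt (2 ^ j * 2 ^ k)
      \<le> real r ^ r * exp v / fact r / sqrt (2 ^ j * 2 ^ k)"
    using E by (intro divide_right_mono) auto
  ultimately show ?thesis by (simp add: field_simps)
qed

lemma denom_bound:
  fixes x L al B :: real and r j k :: nat
  defines "P \<equiv> {p. prime p \<and> real p < x}"
  assumes r: "real r = L + al * L" and r1: "r \<ge> 1"
    and Fx: "primesum x \<le> L + B"
    and Fj: "\<bar>primesum (exp (2 ^ j)) - real j * ln 2\<bar> \<le> B"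
    and Fk: "\<bar>primesum (exp (2 ^ k)) - real k * ln 2\<bar> \<le> B"
    and yj: "exp (2 ^ j) \<le> x" and yk: "exp (2 ^ k) \<le> x" and B0: "B \<ge> 0"
  shows "esym r (\<lambda>p. sqrt (uu j p * uu k p) / real p) P / sqrt (2 ^ j * 2 ^ k)
     \<le> (real r ^ r / fact r) * exp (- (al * L)) * exp (4 * B) * rho ^ ndist j k"
proof (cases "j \<le> k")
  case True
  then show ?thesis unfolding P_def using denom_bound_le[OF r r1 Fx Fj Fk yk True B0] by simp
next
  case False
  then have kj: "k \<le> j" by simp
  have "esym r (\<lambda>p. sqrt (uu k p * uu j p) / real p) P / sqrt (2 ^ k * 2 ^ j)
     \<le> (real r ^ r / fact r) * exp (- (al * L)) * exp (4 * B) * rho ^ ndist k j"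
    unfolding P_def using denom_bound_le[OF r r1 Fx Fk Fj yj kj B0] by simp
  moreover have "ndist k j = ndist j k" unfolding ndist_def by auto
  ultimately show ?thesis by (simp add: mult.commute)
qed

lemma Log_exp_pow: "Log (exp ((2::real) ^ k)) = 2 ^ k"
  unfolding Log_def by simp

lemma Log2_exp_pow:
  assumes "real k * ln 2 \<ge> 1"
  shows "Log2 (exp ((2::real) ^ k)) = real k * ln 2"
proof -
  have "ln ((2::real) ^ k) = real k * ln 2" by (simp add: ln_realpow)
  then show ?thesis unfolding Log2_def Log_exp_pow using assms by (simp add: Log_def)
qed

lemma Yset_eq:
  fixes x al L :: real
  assumes L: "Log2 x = L" "L > 0" and sL: "sqrt L \<ge> 4" and alL: "al * L - sqrt L \<ge> sqrt L"
  defines "k0 \<equiv> nat \<lceil>(al * L - sqrt L) / ln 2\<rceil>" and "k1 \<equiv> nat \<lfloor>(al * L + sqrt L) / ln 2\<rfloor>"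
  shows "Yset x al = (\<lambda>k. exp ((2::real) ^ k)) ` {k0..k1}"
    and "\<And>k. k \<in> {k0..k1} \<Longrightarrow> \<bar>real k * ln 2 - al * L\<bar> \<le> sqrt L"
proof -
  have l2: "ln (2::real) > 0" by simp
  have memK: "k \<in> {k0..k1} \<longleftrightarrow> \<bar>real k * ln 2 - al * L\<bar> \<le> sqrt L" for k :: nat
  proof -
    have p0: "(al * L - sqrt L) / ln 2 \<ge> 0" using alL sL l2 by simp
    have "k0 \<le> k \<longleftrightarrow> (al * L - sqrt L) / ln 2 \<le> real k"
      unfolding k0_def using p0 by (simp add: nat_le_iff ceiling_le_iff)
    also have "\<dots> \<longleftrightarrow> al * L - sqrt L \<le> real k * ln 2" using l2 by (simp add: divide_le_eq)
    finally have a: "k0 \<le> k \<longleftrightarrow> al * L - sqrt L \<le> real k * ln 2" .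
    have "al * L + sqrt L \<ge> 0" using alL sL by linarith
    then have b0: "0 \<le> \<lfloor>(al * L + sqrt L) / ln 2\<rfloor>" using l2 by simp
    have "k \<le> k1 \<longleftrightarrow> int k \<le> \<lfloor>(al * L + sqrt L) / ln 2\<rfloor>"
      unfolding k1_def using b0 by (simp add: le_nat_iff)
    also have "\<dots> \<longleftrightarrow> real k \<le> (al * L + sqrt L) / ln 2"
      by (metis le_floor_iff of_int_of_nat_eq)
    also have "\<dots> \<longleftrightarrow> real k * ln 2 \<le> al * L + sqrt L" using l2 by (simp add: le_divide_eq)
    finally have b: "k \<le> k1 \<longleftrightarrow> real k * ln 2 \<le> al * L + sqrt L" .
    show ?thesis using a b by (auto simp: abs_le_iff)
  qed
  then show "\<And>k. k \<in> {k0..k1} \<Longrightarrow> \<bar>real k * ln 2 - al * L\<bar> \<le> sqrt L" by blast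
  show "Yset x al = (\<lambda>k. exp ((2::real) ^ k)) ` {k0..k1}"
  proof (intro equalityI subsetI)
    fix y assume "y \<in> Yset x al"
    then have y: "y > 0" "\<bar>Log2 y - al * L\<bar> \<le> sqrt L" "Log2 y / ln 2 \<in> \<int>"
      unfolding Yset_def L(1) by auto
    then obtain n where n: "Log2 y / ln 2 = of_int n" by (auto elim: Ints_cases)
    have big: "Log2 y \<ge> 4" using y(2) alL sL by (simp add: abs_le_iff)
    have LL: "Log2 y = ln (Log y)" using big unfolding Log2_def Log_def[of "Log y"] by simp
    have Lg: "Log y > 1"
    proof -
      have "ln (Log y) > 0" using LL big by simp
      then show ?thesis using Log_def by (smt (verit) ln_le_zero_iff)
    qed
    have Ly: "Log y = ln y" using Lg unfolding Log_def by simp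
    have nL: "Log2 y = real_of_int n * ln 2" using n l2 by (simp add: field_simps)
    have npos: "n > 0"
    proof -
      have "real_of_int n * ln 2 > 0" using nL big by simp
      then show ?thesis using l2 by (simp add: zero_less_mult_iff)
    qed
    define k where "k = nat n"
    have kn: "real k = real_of_int n" unfolding k_def using npos by simp
    have "ln y = exp (Log2 y)" using LL Ly Lg by simp
    also have "\<dots> = exp (real k * ln 2)" using nL kn by simp
    also have "\<dots> = 2 ^ k" by (simp add: exp_of_nat_mult)
    finally have "y = exp (2 ^ k)" using y(1) by (metis exp_ln)
    moreover have "k \<in> {k0..k1}" using memK y(2) nL kn by simp
    ultimately show "y \<in> (\<lambda>k. exp ((2::real) ^ k)) ` {k0..k1}" by blast
  next
    fix y assume "y \<in> (\<lambda>k. exp ((2::real) ^ k)) ` {k0..k1}"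
    then obtain k where k: "k \<in> {k0..k1}" "y = exp (2 ^ k)" by blast
    have kb: "\<bar>real k * ln 2 - al * L\<bar> \<le> sqrt L" using memK k by blast
    then have "real k * ln 2 \<ge> 1" using alL sL by (simp add: abs_le_iff)
    then have L2: "Log2 y = real k * ln 2" using k Log2_exp_pow by simp
    show "y \<in> Yset x al"
      unfolding Yset_def L(1) using L2 kb k l2 by auto
  qed
qed

lemma card_K:
  fixes al L :: real
  assumes "sqrt L \<ge> 1" "al * L - sqrt L \<ge> 0"
  shows "real (card {nat \<lceil>(al * L - sqrt L) / ln 2\<rceil>..nat \<lfloor>(al * L + sqrt L) / ln 2\<rfloor>}) \<ge> sqrt L"
proof -
  define a where "a = (al * L - sqrt L) / ln 2"
  define b where "b = (al * L + sqrt L) / ln 2"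
  have l2: "ln (2::real) > 0" "ln (2::real) < 1" using ln_2_less_1 by auto
  have a0: "a \<ge> 0" unfolding a_def using assms l2 by simp
  have ba: "b - a \<ge> 2 * sqrt L"
  proof -
    have "b - a = 2 * sqrt L / ln 2" unfolding a_def b_def by (simp add: field_simps)
    also have "\<dots> \<ge> 2 * sqrt L" using l2 assms by (simp add: le_divide_eq)
    finally show ?thesis .
  qed
  have c1: "real (nat \<lceil>a\<rceil>) \<le> a + 1" using a0 by (simp add: ceiling_correct)
  have c2: "real (nat \<lfloor>b\<rfloor>) \<ge> b - 1" using a0 ba assms by (simp) linarith
  have "nat \<lceil>a\<rceil> \<le> Suc (nat \<lfloor>b\<rfloor>)" using c1 c2 ba assms by linarith
  then have "real (card {nat \<lceil>a\<rceil>..nat \<lfloor>b\<rfloor>}) = real (nat \<lfloor>b\<rfloor>) + 1 - real (nat \<lceil>a\<rceil>)"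
    by (simp add: of_nat_diff)
  also have "\<dots> \<ge> sqrt L" using c1 c2 ba assms by linarith
  finally show ?thesis unfolding a_def b_def .
qed

lemma CM_pos: "CM > 0"
proof -
  have "ln (ln (2::real)) < 0" using ln_2_less_1 by simp
  moreover have "4 / ln (2::real) > 0" by simp
  ultimately show ?thesis unfolding CM_def by linarith
qed

lemma main_bound:
  fixes x L al eps :: real and r :: nat
  defines "B \<equiv> CM + 2"
  defines "B1 \<equiv> 2 * B + 2 * primesum 65"
  defines "c1 \<equiv> exp (- B1 - 6) / 2"
  defines "c2 \<equiv> 2 * exp (4 * B) / (1 - rho)"
  defines "C \<equiv> exp (- B - 1) / sqrt 2 * (c1^2 / c2)"
  assumes x3: "x \<ge> 3" and L: "Log2 x = L" "L = ln (ln x)"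
    and L16: "L \<ge> 16" and Leps: "L \<ge> 4 / eps^2" and LB1: "L \<ge> 4 * B1" and LB2: "L \<ge> 2 * B1^2"
    and eps: "eps > 0" and al: "eps \<le> al" "al \<le> 1 - eps" and r: "real r = L + al * L"
  shows "C \<le> (\<integral>w. (if omega (n_lt w x) = r then 1 else 0) *
                  Max ((\<lambda>y. real (tau (n_lt w y)) / Log y) ` Yset x al) \<partial>model)"
proof -
  have B0: "B \<ge> 0" unfolding B_def using CM_pos by simp
  have F650: "primesum 65 \<ge> 0" by (rule primesum_nonneg)
  have B10: "B1 \<ge> 0" unfolding B1_def using B0 F650 by simp
  have L0: "L > 0" using L16 by simp
  have sL: "sqrt L \<ge> 4"
  proof -
    have "sqrt 16 \<le> sqrt L" using L16 by (subst real_sqrt_le_iff) simp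
    moreover have "sqrt (16::real) = 4" by (simp add: real_sqrt_eq_iff)
    ultimately show ?thesis by simp
  qed
  have sLL: "sqrt L * sqrt L = L" using L0 by simp
  have eL: "eps * L \<ge> 2 * sqrt L"
  proof -
    have "sqrt (4 / eps^2) \<le> sqrt L" using Leps by (subst real_sqrt_le_iff) simp
    moreover have "sqrt (4 / eps^2) = 2 / eps" using eps by (simp add: real_sqrt_divide)
    ultimately have "2 / eps \<le> sqrt L" by simp
    then have "2 \<le> eps * sqrt L" using eps by (simp add: field_simps)
    then have "2 * sqrt L \<le> eps * sqrt L * sqrt L" using sL L0 by (intro mult_right_mono) auto
    then show ?thesis using sLL by (simp add: mult.assoc)
  qed
  have alL: "al * L - sqrt L \<ge> sqrt L"
  proof -
    have "eps * L \<le> al * L" using al L0 by (intro mult_right_mono) auto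
    then show ?thesis using eL by linarith
  qed
  have alU: "al * L + sqrt L \<le> L - sqrt L"
  proof -
    have "al * L \<le> (1 - eps) * L" using al L0 by (intro mult_right_mono) auto
    then show ?thesis using eL by (simp add: algebra_simps)
  qed
  have c1L: "sqrt L + B1 \<le> L / 2"
  proof -
    have "4 * sqrt L \<le> sqrt L * sqrt L" using sL L0 by (intro mult_right_mono) auto
    then show ?thesis using sLL LB1 by linarith
  qed
  have rL: "real r \<ge> L" "real r \<le> 2 * L" using r al L0 eps by (auto intro: mult_right_le_one_le)
  have r1: "r \<ge> 1" using rL L16 by linarith
  define k0 where "k0 = nat \<lceil>(al * L - sqrt L) / ln 2\<rceil>"
  define k1 where "k1 = nat \<lfloor>(al * L + sqrt L) / ln 2\<rfloor>"
  define K where "K = {k0..k1}"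
  have YK: "Yset x al = (\<lambda>k. exp ((2::real) ^ k)) ` K"
    unfolding K_def k0_def k1_def using Yset_eq(1)[OF L(1) L0 sL alL] .
  have kb: "\<bar>real k * ln 2 - al * L\<bar> \<le> sqrt L" if "k \<in> K" for k
    using Yset_eq(2)[OF L(1) L0 sL alL] that unfolding K_def k0_def k1_def by blast
  have cardK: "real (card K) \<ge> sqrt L"
    unfolding K_def k0_def k1_def using card_K[of L al] sL alL L16 by simp
  have finK: "finite K" unfolding K_def by simp
  have Kne: "K \<noteq> {}" using cardK sL L0 by auto
  have lnx: "ln x > 0" using x3 by simp
  have kfacts: "real k * ln 2 \<ge> 4" "real k * ln 2 \<le> L" "exp ((2::real) ^ k) \<le> x"
       "\<bar>primesum (exp ((2::real) ^ k)) - real k * ln 2\<bar> \<le> B" if "k \<in> K" for k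
  proof -
    show k4: "real k * ln 2 \<ge> 4" using kb[OF that] alL sL by (simp add: abs_le_iff)
    show kL: "real k * ln 2 \<le> L" using kb[OF that] alU sL by (simp add: abs_le_iff)
    have p2: "(2::real) ^ k = exp (real k * ln 2)" by (simp add: exp_of_nat_mult)
    have "(2::real) ^ k \<le> exp L" unfolding p2 using kL by simp
    also have "exp L = ln x" using L(2) lnx by simp
    finally have "exp ((2::real) ^ k) \<le> exp (ln x)" by simp
    then show "exp ((2::real) ^ k) \<le> x" using x3 by simp
    have "(2::real) ^ k \<ge> 2"
    proof -
      have "k \<ge> 1" using k4 by (cases k) auto
      then show ?thesis by (metis power_one_right power_increasing one_le_numeral)
    qed
    then have e3: "exp ((2::real) ^ k) \<ge> 3" using exp_ge_add_one_self[of "(2::real)^k"] by linarith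
    have "ln (ln (exp ((2::real) ^ k))) = real k * ln 2" by (simp add: ln_realpow)
    then show "\<bar>primesum (exp ((2::real) ^ k)) - real k * ln 2\<bar> \<le> B"
      using primesum_mertens[OF e3] unfolding B_def by simp
  qed
  have Fx: "\<bar>primesum x - L\<bar> \<le> B" using primesum_mertens[OF x3] L(2) unfolding B_def by simp
  have finY: "finite (Yset x al)" unfolding YK using finK by simp
  have Yx: "\<And>y. y \<in> Yset x al \<Longrightarrow> y \<le> x" unfolding YK using kfacts(3) by auto
  define P where "P = {p. prime p \<and> real p < x}"
  have finP: "finite P" unfolding P_def by (rule finite_primes_below)
  have Ppos: "\<And>p. p \<in> P \<Longrightarrow> p > 0" unfolding P_def using prime_gt_0_nat by auto
  define lam where "lam = c1 / c2"
  have rho: "0 \<le> rho" "rho < 1" by (rule rho_bounds)+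
  have c1pos: "c1 > 0" unfolding c1_def by simp
  have c2pos: "c2 > 0" unfolding c2_def using rho by simp
  have lam0: "lam \<ge> 0" unfolding lam_def using c1pos c2pos by simp
  define V where "V = (real r ^ r / fact r) * exp (- (al * L))"
  have V0: "V > 0" unfolding V_def using r1 by simp
  define Q0 where "Q0 = (\<Prod>p\<in>P. 1 - 1 / (real p + 1))"
  define T1 where "T1 = (\<Sum>k\<in>K. esym r (\<lambda>p. uu k p / real p) P / 2 ^ k)"
  define T2 where "T2 = (\<Sum>j\<in>K. \<Sum>k\<in>K. esym r (\<lambda>p. sqrt (uu j p * uu k p) / real p) P / sqrt (2 ^ j * 2 ^ k))"
  have integral_eq: "(\<integral>w. (if omega (n_lt w x) = r then 1 else 0) *
                  Max ((\<lambda>y. real (tau (n_lt w y)) / Log y) ` Yset x al) \<partial>model)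
      = (\<Sum>A\<in>Pow P. mu P A * ((if card A = r then 1 else 0) *
            Max ((\<lambda>y. real (2 ^ card {p\<in>A. real p < y}) / Log y) ` Yset x al)))"
    unfolding P_def by (rule integral_model_sum[OF finY Yx])
  have low: "Q0 * (2 * lam * T1 - lam^2 * T2) \<le> (\<Sum>A\<in>Pow P. mu P A * ((if card A = r then 1 else 0) *
            Max ((\<lambda>y. real (2 ^ card {p\<in>A. real p < y}) / Log y) ` Yset x al)))"
  proof -
    have yY: "\<And>k. k \<in> K \<Longrightarrow> exp ((2::real) ^ k) \<in> Yset x al" unfolding YK by blast
    have Logy: "\<And>k. k \<in> K \<Longrightarrow> Log (exp ((2::real) ^ k)) = 2 ^ k" by (rule Log_exp_pow)
    show ?thesis
      using sum_lower_esym[OF finP Ppos finK Kne finY yY Logy lam0, of r]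
      unfolding Q0_def T1_def T2_def uu_def .
  qed
  have T1_ge: "T1 \<ge> real (card K) * (c1 * V)"
    unfolding T1_def
  proof (rule sum_bounded_below)
    fix k assume k: "k \<in> K"
    have "(real r ^ r / fact r) * exp (- (al * L)) * (exp (- B1 - 6) / 2)
        \<le> esym r (\<lambda>p. (if real p < exp (2 ^ k) then 2 else 1) / real p) {p. prime p \<and> real p < x} / 2 ^ k"
      unfolding B1_def
    proof (rule numer_bound[OF r])
      show "4 \<le> L" using L16 by simp
      show "L - B \<le> primesum x" using Fx by (simp add: abs_le_iff)
      show "real k * ln 2 - B \<le> primesum (exp (2 ^ k))" using kfacts(4)[OF k] by (simp add: abs_le_iff)
      show "exp (2 ^ k) \<le> x" using kfacts(3)[OF k] by simp
      show "\<bar>real k * ln 2 - al * L\<bar> \<le> sqrt L" by (rule kb[OF k])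
      show "sqrt L + (2 * B + 2 * primesum 65) \<le> L / 2" using c1L unfolding B1_def .
      show "2 * (2 * B + 2 * primesum 65)^2 \<le> L" using LB2 unfolding B1_def .
      show "0 \<le> al" using al eps by simp
      show "0 \<le> B" by (rule B0)
    qed
    then show "c1 * V \<le> esym r (\<lambda>p. uu k p / real p) P / 2 ^ k"
      unfolding c1_def V_def uu_def P_def B1_def by (simp add: mult_ac)
  qed
  have T2_le: "T2 \<le> real (card K) * (c2 * V)"
  proof -
    have "T2 \<le> (\<Sum>j\<in>K. \<Sum>k\<in>K. V * exp (4 * B) * rho ^ ndist j k)"
      unfolding T2_def
    proof (intro sum_mono)
      fix j k assume j: "j \<in> K" and k: "k \<in> K"
      have "esym r (\<lambda>p. sqrt (uu j p * uu k p) / real p) P / sqrt (2 ^ j * 2 ^ k)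
          \<le> (real r ^ r / fact r) * exp (- (al * L)) * exp (4 * B) * rho ^ ndist j k"
        unfolding P_def
      proof (rule denom_bound[OF r r1])
        show "primesum x \<le> L + B" using Fx by (simp add: abs_le_iff)
        show "\<bar>primesum (exp (2 ^ j)) - real j * ln 2\<bar> \<le> B" using kfacts(4)[OF j] by simp
        show "\<bar>primesum (exp (2 ^ k)) - real k * ln 2\<bar> \<le> B" using kfacts(4)[OF k] by simp
        show "exp (2 ^ j) \<le> x" using kfacts(3)[OF j] by simp
        show "exp (2 ^ k) \<le> x" using kfacts(3)[OF k] by simp
        show "0 \<le> B" by (rule B0)
      qed
      then show "esym r (\<lambda>p. sqrt (uu j p * uu k p) / real p) P / sqrt (2 ^ j * 2 ^ k) \<le> V * exp (4 * B) * rho ^ ndist j k"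
        unfolding V_def by simp
    qed
    also have "\<dots> = V * exp (4 * B) * (\<Sum>j\<in>K. \<Sum>k\<in>K. rho ^ ndist j k)"
      by (simp add: sum_distrib_left)
    also have "(\<Sum>j\<in>K. \<Sum>k\<in>K. rho ^ ndist j k) \<le> real (card K) * (2 / (1 - rho))"
      using geom_dist[OF rho finK] by (intro sum_bounded_above) auto
    then have "V * exp (4 * B) * (\<Sum>j\<in>K. \<Sum>k\<in>K. rho ^ ndist j k) \<le> V * exp (4 * B) * (real (card K) * (2 / (1 - rho)))"
      using V0 by (intro mult_left_mono) auto
    also have "\<dots> = real (card K) * (c2 * V)" unfolding c2_def by (simp add: field_simps)
    finally show ?thesis .
  qed
  define W where "W = real (card K) * V"
  have W0: "W > 0" unfolding W_def using V0 cardK sL by simp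
  have key: "(c1^2 / c2) * W \<le> 2 * lam * T1 - lam^2 * T2"
  proof -
    have "2 * lam * (real (card K) * (c1 * V)) \<le> 2 * lam * T1" using T1_ge lam0 by (intro mult_left_mono) auto
    moreover have "lam^2 * T2 \<le> lam^2 * (real (card K) * (c2 * V))" using T2_le by (intro mult_left_mono) auto
    moreover have "2 * lam * (real (card K) * (c1 * V)) - lam^2 * (real (card K) * (c2 * V)) = (c1^2 / c2) * W"
      unfolding lam_def W_def using c2pos by (simp add: field_simps power2_eq_square)
    ultimately show ?thesis by linarith
  qed
  have Q0_ge: "Q0 \<ge> exp (- (L + B))"
  proof -
    have "exp (- (\<Sum>p\<in>P. 1 / real p)) \<le> Q0" unfolding Q0_def by (rule Q0_lower[OF finP Ppos])
    moreover have "(\<Sum>p\<in>P. 1 / real p) = primesum x" unfolding P_def primesum_def ..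
    moreover have "primesum x \<le> L + B" using Fx by (simp add: abs_le_iff)
    ultimately show ?thesis by (smt (verit) exp_le_cancel_iff)
  qed
  have W_ge: "W \<ge> exp (real r - 1) / sqrt (real r) * exp (- (al * L)) * sqrt L"
  proof -
    have st: "exp (real r - 1) / sqrt (real r) \<le> real r ^ r / fact r"
      by (rule stirling_ratio[OF r1 ln_fact_upper[OF r1]])
    have "exp (real r - 1) / sqrt (real r) * exp (- (al * L)) * sqrt L \<le> (real r ^ r / fact r) * exp (- (al * L)) * real (card K)"
      using st cardK L0 by (intro mult_mono) auto
    then show ?thesis unfolding W_def V_def by (simp add: mult_ac)
  qed
  have final: "C \<le> Q0 * (2 * lam * T1 - lam^2 * T2)"
  proof -
    have "exp (- (L + B)) * (exp (real r - 1) / sqrt (real r) * exp (- (al * L)) * sqrt L)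
        = exp (- B - 1) * (sqrt L / sqrt (real r))"
    proof -
      have "exp (- (L + B)) * exp (real r - 1) * exp (- (al * L)) = exp (- B - 1)"
        using r by (simp add: exp_add[symmetric])
      then show ?thesis by (simp add: field_simps)
    qed
    moreover have "sqrt L / sqrt (real r) \<ge> 1 / sqrt 2"
    proof -
      have "sqrt (real r) \<le> sqrt 2 * sqrt L" using rL by (simp add: real_sqrt_mult[symmetric])
      then show ?thesis using L0 r1 by (simp add: field_simps)
    qed
    ultimately have "exp (- B - 1) * (1 / sqrt 2) \<le> exp (- (L + B)) * (exp (real r - 1) / sqrt (real r) * exp (- (al * L)) * sqrt L)"
      by (metis exp_ge_zero mult_left_mono)
    also have "\<dots> \<le> exp (- (L + B)) * W" using W_ge by (intro mult_left_mono) auto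
    finally have "exp (- B - 1) / sqrt 2 \<le> exp (- (L + B)) * W" by simp
    also have "\<dots> \<le> Q0 * W" using Q0_ge W0 by (intro mult_right_mono) auto
    finally have "exp (- B - 1) / sqrt 2 \<le> Q0 * W" .
    then have "(c1^2 / c2) * (exp (- B - 1) / sqrt 2) \<le> (c1^2 / c2) * (Q0 * W)"
      using c1pos c2pos by (intro mult_left_mono) auto
    then have "C \<le> (c1^2 / c2) * (Q0 * W)" unfolding C_def by (simp add: mult.commute)
    also have "\<dots> = Q0 * ((c1^2 / c2) * W)" by simp
    also have "\<dots> \<le> Q0 * (2 * lam * T1 - lam^2 * T2)"
      using key Q0_ge by (intro mult_left_mono) (auto intro: order_trans[OF less_imp_le[OF exp_gt_zero]])
    finally show ?thesis .
  qed
  show ?thesis using final low integral_eq by linarith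
qed

theorem proposition3p3:
  fixes \<epsilon> :: real
  assumes "\<epsilon> > 0"
  shows "\<exists>C>0. \<exists>X0. \<forall>x\<ge>X0. \<forall>r::nat.
           (1 + \<epsilon>) * Log2 x \<le> real r \<and> real r \<le> (2 - \<epsilon>) * Log2 x \<longrightarrow>
           (let \<alpha> = real r / Log2 x - 1 in
             (\<integral>w. (if omega (n_lt w x) = r then 1 else 0) *
                  Max ((\<lambda>y. real (tau (n_lt w y)) / Log y) ` Yset x \<alpha>) \<partial>model) \<ge> C)"
proof -
  define B where "B = CM + 2"
  define B1 where "B1 = 2 * B + 2 * primesum 65"
  define c1 where "c1 = exp (- B1 - 6) / 2"
  define c2 where "c2 = 2 * exp (4 * B) / (1 - rho)"
  define C where "C = exp (- B - 1) / sqrt 2 * (c1^2 / c2)"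
  define L0 where "L0 = max (max 16 (4 / \<epsilon>^2)) (max (4 * B1) (2 * B1^2))"
  have Cpos: "C > 0" unfolding C_def c1_def c2_def using rho_bounds by simp
  have main: "(let \<alpha> = real r / Log2 x - 1 in
             (\<integral>w. (if omega (n_lt w x) = r then 1 else 0) *
                  Max ((\<lambda>y. real (tau (n_lt w y)) / Log y) ` Yset x \<alpha>) \<partial>model) \<ge> C)"
    if x: "x \<ge> exp (exp L0)" and hr: "(1 + \<epsilon>) * Log2 x \<le> real r \<and> real r \<le> (2 - \<epsilon>) * Log2 x"
    for x :: real and r :: nat
  proof -
    have L0_16: "L0 \<ge> 16" unfolding L0_def by simp
    have eL0: "exp L0 \<ge> 1 + L0" by (rule exp_ge_add_one_self)
    have xpos: "x > 0" using x exp_gt_zero[of "exp L0"] by linarith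
    have "ln (exp (exp L0)) \<le> ln x" using x xpos by (subst ln_le_cancel_iff) auto
    then have lnx: "ln x \<ge> exp L0" by simp
    have lnx17: "ln x \<ge> 17" using lnx eL0 L0_16 by linarith
    have x3: "x \<ge> 3"
    proof -
      have "exp (exp L0) \<ge> 1 + exp L0" by (rule exp_ge_add_one_self)
      then show ?thesis using x eL0 L0_16 by linarith
    qed
    define L where "L = ln (ln x)"
    have lnxp: "ln x > 0" using lnx exp_gt_zero[of L0] by linarith
    have "ln (exp L0) \<le> ln (ln x)" using lnx lnxp by (subst ln_le_cancel_iff) auto
    then have LL0: "L \<ge> L0" unfolding L_def by simp
    have Logx: "Log x = ln x" unfolding Log_def using lnx17 by simp
    have L2: "Log2 x = L" unfolding Log2_def Logx L_def Log_def[of "ln x"] using LL0 L0_16 by (simp add: L_def)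
    have Lpos: "L > 0" using LL0 L0_16 by simp
    define al where "al = real r / L - 1"
    have r: "real r = L + al * L" unfolding al_def using Lpos by (simp add: field_simps)
    have al1: "\<epsilon> \<le> al"
    proof -
      have "(1 + \<epsilon>) * L \<le> real r" using hr L2 by simp
      then have "1 + \<epsilon> \<le> real r / L" using Lpos by (simp add: le_divide_eq)
      then show ?thesis unfolding al_def by simp
    qed
    have al2: "al \<le> 1 - \<epsilon>"
    proof -
      have "real r \<le> (2 - \<epsilon>) * L" using hr L2 by simp
      then have "real r / L \<le> 2 - \<epsilon>" using Lpos by (simp add: divide_le_eq)
      then show ?thesis unfolding al_def by simp
    qed
    have "C \<le> (\<integral>w. (if omega (n_lt w x) = r then 1 else 0) *
                  Max ((\<lambda>y. real (tau (n_lt w y)) / Log y) ` Yset x al) \<partial>model)"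
      unfolding C_def c1_def c2_def B1_def B_def
    proof (rule main_bound[OF x3 L2 L_def])
      show "16 \<le> L" using LL0 L0_16 by simp
      show "4 / \<epsilon>^2 \<le> L" using LL0 unfolding L0_def by simp
      show "4 * (2 * (CM + 2) + 2 * primesum 65) \<le> L" using LL0 unfolding L0_def B1_def B_def by simp
      show "2 * (2 * (CM + 2) + 2 * primesum 65)^2 \<le> L" using LL0 unfolding L0_def B1_def B_def by simp
    qed (use assms al1 al2 r in auto)
    then show "(let \<alpha> = real r / Log2 x - 1 in
             (\<integral>w. (if omega (n_lt w x) = r then 1 else 0) *
                  Max ((\<lambda>y. real (tau (n_lt w y)) / Log y) ` Yset x \<alpha>) \<partial>model) \<ge> C)"
      unfolding Let_def L2 al_def by simp
  qed
  show ?thesis using Cpos main by blast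
qed


end
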